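(* Assume $\mathcal Q$ is locally dominated. Then every anytime-valid $p$-value for $\mathcal Q$ is dominated by a $\mathcal Q$-admissible anytime-valid $p$-value for $\mathcal Q$ (i.e. for every $\mathcal Q$-valid $(\mathfrak p_t)$ there is a $\mathcal Q$-admissible $(\mathfrak p'_t)$ with $\mathtt Q(\mathfrak p'_t\le\mathfrak p_t)=1$ for all $t$ and $\mathtt Q\in\mathcal Q$). Likewise every anytime-valid $e$-value for $\mathcal Q$ is dominated (from above) by a $\mathcal Q$-admissible one, and every $(\mathcal Q,\alpha)$-sequential test is dominated (from above) by a $\mathcal Q$-admissible $(\mathcal Q,\alpha)$-sequential test.
   Context: Setup: observations $(X_t)_{t\in\mathbb N}$, an independent $[0,1]$-uniform $U$, filtration $\mathcal F_0=\sigma(U)$, $\mathcal F_t=\sigma(U,X_1,\dots,X_t)$, $\mathcal F_\infty=\sigma(\bigcup_t\mathcal F_t)$; probability measures are on $\mathcal F_\infty$; stopping times may be infinite. $\mathcal Q$ is locally dominated if some probability $\mathtt R$ satisfies $\mathtt Q|_{\mathcal F_t}\ll\mathtt R|_{\mathcal F_t}$ for all $t$ and $\mathtt Q\in\mathcal Q$. - $\mathcal Q$-valid $p$-value: adapted $[0,1]$-valued $(\mathfrak p_t)_{t\in\mathbb N_0}$ with $\mathtt Q(\mathfrak p_\tau\le\alpha)\le\alpha$ for all stopping times $\tau$, $\mathtt Q\in\mathcal Q$, $\alpha\in[0,1]$ ($\mathfrak p_\infty:=\liminf_t\mathfrak p_t$). - $\mathcal Q$-safe $e$-value: adapted $[0,\infty]$-valued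 $(\mathfrak e_t)$ with $\mathtt E_{\mathtt Q}[\mathfrak e_\tau]\le1$ for all stopping times $\tau$, $\mathtt Q\in\mathcal Q$ ($\mathfrak e_\infty:=\limsup_t\mathfrak e_t$). - $(\mathcal Q,\alpha)$-sequential test: adapted $\{0,1\}$-valued $(\psi_t)$ with $\mathtt Q(\psi_\tau=1)\le\alpha$ for all stopping times $\tau$, $\mathtt Q\in\mathcal Q$ ($\psi_\infty:=\limsup_t\psi_t$). - Admissibility: a $\mathcal Q$-valid $(\mathfrak p_t)$ is $\mathcal Q$-inadmissible if there is a $\mathcal Q$-valid $(\mathfrak p'_t)$ with $\mathtt Q(\mathfrak p'_t\le\mathfrak p_t)=1$ for all $t\in\mathbb N_0$, $\mathtt Q\in\mathcal Q$, and $\mathtt Q(\mathfrak p'_t<\mathfrak p_t)>0$ for some $t$ and some $\mathtt Q\in\mathcal Q$; $\mathcal Q$-admissible otherwise. Analogously for $e$-values and sequential tests with reversed inequalities. *)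

theory Defs
  imports "HOL-Probability.Probability"
begin

text \<open>Sample space Omega (a carrier set), observations X 1, X 2, ... with values in the
measurable space S (X 0 is unused), and the randomisation variable U (real valued).\<close>

definition Fil :: "'w set \<Rightarrow> 'x measure \<Rightarrow> ('w \<Rightarrow> real) \<Rightarrow> (nat \<Rightarrow> 'w \<Rightarrow> 'x) \<Rightarrow> nat \<Rightarrow> 'w measure" where
  "Fil \<Omega> S U X t = sigma \<Omega>
     ({U -` B \<inter> \<Omega> | B. B \<in> sets borel} \<union>
      (\<Union>s\<in>{1..t}. {X s -` A \<inter> \<Omega> | A. A \<in> sets S}))"

definition Finf :: "'w set \<Rightarrow> 'x measure \<Rightarrow> ('w \<Rightarrow> real) \<Rightarrow> (nat \<Rightarrow> 'w \<Rightarrow> 'x) \<Rightarrow> 'w measure" where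
  "Finf \<Omega> S U X = sigma \<Omega> (\<Union>t. sets (Fil \<Omega> S U X t))"

definition is_stopping_time :: "(nat \<Rightarrow> 'w measure) \<Rightarrow> ('w \<Rightarrow> enat) \<Rightarrow> bool" where
  "is_stopping_time F \<tau> \<longleftrightarrow> (\<forall>t::nat. {w \<in> space (F t). \<tau> w \<le> enat t} \<in> sets (F t))"

definition stopped_p :: "(nat \<Rightarrow> 'w \<Rightarrow> real) \<Rightarrow> ('w \<Rightarrow> enat) \<Rightarrow> 'w \<Rightarrow> real" where
  "stopped_p p \<tau> w = (case \<tau> w of enat t \<Rightarrow> p t w
                         | \<infinity> \<Rightarrow> real_of_ereal (liminf (\<lambda>t. ereal (p t w))))"

definition stopped_e :: "(nat \<Rightarrow> 'w \<Rightarrow> ennreal) \<Rightarrow> ('w \<Rightarrow> enat) \<Rightarrow> 'w \<Rightarrow> ennreal" where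
  "stopped_e e \<tau> w = (case \<tau> w of enat t \<Rightarrow> e t w | \<infinity> \<Rightarrow> limsup (\<lambda>t. e t w))"

definition stopped_test :: "(nat \<Rightarrow> 'w \<Rightarrow> bool) \<Rightarrow> ('w \<Rightarrow> enat) \<Rightarrow> 'w \<Rightarrow> bool" where
  "stopped_test \<psi> \<tau> w = (case \<tau> w of enat t \<Rightarrow> \<psi> t w | \<infinity> \<Rightarrow> limsup (\<lambda>t. \<psi> t w))"

definition valid_p :: "(nat \<Rightarrow> 'w measure) \<Rightarrow> 'w measure set \<Rightarrow> (nat \<Rightarrow> 'w \<Rightarrow> real) \<Rightarrow> bool" where
  "valid_p F \<Q> p \<longleftrightarrow>
     (\<forall>t. p t \<in> borel_measurable (F t)) \<and>
     (\<forall>t. \<forall>w\<in>space (F t). 0 \<le> p t w \<and> p t w \<le> 1) \<and>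
     (\<forall>\<tau> Q \<alpha>. is_stopping_time F \<tau> \<longrightarrow> Q \<in> \<Q> \<longrightarrow> 0 \<le> \<alpha> \<longrightarrow> \<alpha> \<le> 1 \<longrightarrow>
        measure Q {w \<in> space Q. stopped_p p \<tau> w \<le> \<alpha>} \<le> \<alpha>)"

definition dominates_p :: "'w measure set \<Rightarrow> (nat \<Rightarrow> 'w \<Rightarrow> real) \<Rightarrow> (nat \<Rightarrow> 'w \<Rightarrow> real) \<Rightarrow> bool" where
  "dominates_p \<Q> p' p \<longleftrightarrow> (\<forall>Q\<in>\<Q>. \<forall>t. AE w in Q. p' t w \<le> p t w)"

definition admissible_p :: "(nat \<Rightarrow> 'w measure) \<Rightarrow> 'w measure set \<Rightarrow> (nat \<Rightarrow> 'w \<Rightarrow> real) \<Rightarrow> bool" where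
  "admissible_p F \<Q> p \<longleftrightarrow> valid_p F \<Q> p \<and>
     \<not> (\<exists>p'. valid_p F \<Q> p' \<and> dominates_p \<Q> p' p \<and>
            (\<exists>t. \<exists>Q\<in>\<Q>. measure Q {w \<in> space Q. p' t w < p t w} > 0))"

definition safe_e :: "(nat \<Rightarrow> 'w measure) \<Rightarrow> 'w measure set \<Rightarrow> (nat \<Rightarrow> 'w \<Rightarrow> ennreal) \<Rightarrow> bool" where
  "safe_e F \<Q> e \<longleftrightarrow>
     (\<forall>t. e t \<in> borel_measurable (F t)) \<and>
     (\<forall>\<tau> Q. is_stopping_time F \<tau> \<longrightarrow> Q \<in> \<Q> \<longrightarrow> (\<integral>\<^sup>+ w. stopped_e e \<tau> w \<partial>Q) \<le> 1)"

definition dominates_e :: "'w measure set \<Rightarrow> (nat \<Rightarrow> 'w \<Rightarrow> ennreal) \<Rightarrow> (nat \<Rightarrow> 'w \<Rightarrow> ennreal) \<Rightarrow> bool" where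
  "dominates_e \<Q> e' e \<longleftrightarrow> (\<forall>Q\<in>\<Q>. \<forall>t. AE w in Q. e' t w \<ge> e t w)"

definition admissible_e :: "(nat \<Rightarrow> 'w measure) \<Rightarrow> 'w measure set \<Rightarrow> (nat \<Rightarrow> 'w \<Rightarrow> ennreal) \<Rightarrow> bool" where
  "admissible_e F \<Q> e \<longleftrightarrow> safe_e F \<Q> e \<and>
     \<not> (\<exists>e'. safe_e F \<Q> e' \<and> dominates_e \<Q> e' e \<and>
            (\<exists>t. \<exists>Q\<in>\<Q>. measure Q {w \<in> space Q. e' t w > e t w} > 0))"

subsection \<open>Sequential tests (value True = reject = 1)\<close>

definition seq_test :: "(nat \<Rightarrow> 'w measure) \<Rightarrow> 'w measure set \<Rightarrow> real \<Rightarrow> (nat \<Rightarrow> 'w \<Rightarrow> bool) \<Rightarrow> bool" where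
  "seq_test F \<Q> \<alpha> \<psi> \<longleftrightarrow>
     (\<forall>t. \<psi> t \<in> F t \<rightarrow>\<^sub>M count_space UNIV) \<and>
     (\<forall>\<tau> Q. is_stopping_time F \<tau> \<longrightarrow> Q \<in> \<Q> \<longrightarrow>
        measure Q {w \<in> space Q. stopped_test \<psi> \<tau> w} \<le> \<alpha>)"

definition dominates_test :: "'w measure set \<Rightarrow> (nat \<Rightarrow> 'w \<Rightarrow> bool) \<Rightarrow> (nat \<Rightarrow> 'w \<Rightarrow> bool) \<Rightarrow> bool" where
  "dominates_test \<Q> \<psi>' \<psi> \<longleftrightarrow> (\<forall>Q\<in>\<Q>. \<forall>t. AE w in Q. \<psi>' t w \<ge> \<psi> t w)"

definition admissible_test :: "(nat \<Rightarrow> 'w measure) \<Rightarrow> 'w measure set \<Rightarrow> real \<Rightarrow> (nat \<Rightarrow> 'w \<Rightarrow> bool) \<Rightarrow> bool" where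
  "admissible_test F \<Q> \<alpha> \<psi> \<longleftrightarrow> seq_test F \<Q> \<alpha> \<psi> \<and>
     \<not> (\<exists>\<psi>'. seq_test F \<Q> \<alpha> \<psi>' \<and> dominates_test \<Q> \<psi>' \<psi> \<and>
            (\<exists>t. \<exists>Q\<in>\<Q>. measure Q {w \<in> space Q. \<psi>' t w > \<psi> t w} > 0))"

definition locally_dominated :: "(nat \<Rightarrow> 'w measure) \<Rightarrow> 'w measure \<Rightarrow> 'w measure set \<Rightarrow> bool" where
  "locally_dominated F Finfty \<Q> \<longleftrightarrow>
     (\<exists>R. prob_space R \<and> sets R = sets Finfty \<and>
        (\<forall>t. \<forall>Q\<in>\<Q>. \<forall>A\<in>sets (F t). emeasure R A = 0 \<longrightarrow> emeasure Q A = 0))"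

end

theory Submission
  imports Defs
begin


locale filt =
  fixes \<Omega> :: "'w set" and F :: "nat \<Rightarrow> 'w measure"
  assumes space_F: "space (F t) = \<Omega>"
    and mono_F: "s \<le> t \<Longrightarrow> sets (F s) \<subseteq> sets (F t)"
begin

lemma stop_le_set: "is_stopping_time F \<tau> \<Longrightarrow> {w\<in>\<Omega>. \<tau> w \<le> enat t} \<in> sets (F t)"
  unfolding is_stopping_time_def using space_F by auto

lemma stop_ge_set: assumes "is_stopping_time F \<tau>" shows "{w\<in>\<Omega>. enat t \<le> \<tau> w} \<in> sets (F t)"
proof (cases t)
  case 0
  then show ?thesis using sets.top[of "F 0"] space_F by (simp add: zero_enat_def[symmetric])
next
  case (Suc s)
  have "{w\<in>\<Omega>. enat t \<le> \<tau> w} = space (F t) - {w\<in>\<Omega>. \<tau> w \<le> enat s}"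
    using Suc space_F by (auto simp: Suc_ile_eq not_le)
  moreover have "{w\<in>\<Omega>. \<tau> w \<le> enat s} \<in> sets (F t)"
    using stop_le_set[OF assms, of s] mono_F[of s t] Suc by auto
  ultimately show ?thesis by auto
qed

lemma stop_eq_set: assumes "is_stopping_time F \<tau>" shows "{w\<in>\<Omega>. \<tau> w = enat t} \<in> sets (F t)"
proof -
  have "{w\<in>\<Omega>. \<tau> w = enat t} = {w\<in>\<Omega>. \<tau> w \<le> enat t} \<inter> {w\<in>\<Omega>. enat t \<le> \<tau> w}" by auto
  then show ?thesis using stop_le_set[OF assms] stop_ge_set[OF assms] by auto
qed

definition hit :: "(nat \<Rightarrow> 'w set) \<Rightarrow> ('w \<Rightarrow> enat) \<Rightarrow> 'w \<Rightarrow> enat" where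
  "hit H \<tau> w = (if \<exists>t. enat t \<le> \<tau> w \<and> w \<in> H t then enat (LEAST t. enat t \<le> \<tau> w \<and> w \<in> H t) else \<infinity>)"

lemma hit_props: assumes "enat t \<le> \<tau> w" "w \<in> H t"
  shows "\<exists>m. hit H \<tau> w = enat m \<and> m \<le> t \<and> enat m \<le> \<tau> w \<and> w \<in> H m"
proof -
  let ?P = "\<lambda>t. enat t \<le> \<tau> w \<and> w \<in> H t"
  have "?P t" using assms by auto
  then show ?thesis unfolding hit_def using LeastI[of ?P t] Least_le[of ?P t] by auto
qed

lemma hit_fin: assumes "hit H \<tau> w = enat m" shows "enat m \<le> \<tau> w \<and> w \<in> H m"
proof -
  let ?P = "\<lambda>t. enat t \<le> \<tau> w \<and> w \<in> H t"
  have ex: "\<exists>t. ?P t" using assms unfolding hit_def by (auto split: if_splits)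
  then have "m = (LEAST t. ?P t)" using assms unfolding hit_def by auto
  then show ?thesis using ex LeastI_ex[of ?P] by auto
qed

lemma hit_stopping:
  assumes H: "\<And>t. H t \<in> sets (F t)" and st: "is_stopping_time F \<tau>"
  shows "is_stopping_time F (hit H \<tau>)"
  unfolding is_stopping_time_def
proof
  fix t
  have eq: "{w \<in> space (F t). hit H \<tau> w \<le> enat t} = (\<Union>s\<in>{..t}. {w\<in>\<Omega>. enat s \<le> \<tau> w} \<inter> H s)"
  proof (intro equalityI subsetI)
    fix w assume w: "w \<in> {w \<in> space (F t). hit H \<tau> w \<le> enat t}"
    then obtain m where m: "hit H \<tau> w = enat m" by (cases "hit H \<tau> w") auto
    with w have "m \<le> t" by auto
    with hit_fin[OF m] w space_F show "w \<in> (\<Union>s\<in>{..t}. {w\<in>\<Omega>. enat s \<le> \<tau> w} \<inter> H s)" by auto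
  next
    fix w assume "w \<in> (\<Union>s\<in>{..t}. {w\<in>\<Omega>. enat s \<le> \<tau> w} \<inter> H s)"
    then obtain s where s: "s \<le> t" "w \<in> \<Omega>" "enat s \<le> \<tau> w" "w \<in> H s" by auto
    from hit_props[of s \<tau> w H, OF s(3,4)] s show "w \<in> {w \<in> space (F t). hit H \<tau> w \<le> enat t}"
      using space_F by auto
  qed
  have "\<And>s. s \<in> {..t} \<Longrightarrow> {w\<in>\<Omega>. enat s \<le> \<tau> w} \<inter> H s \<in> sets (F t)"
    using stop_ge_set[OF st] H mono_F by blast
  then show "{w \<in> space (F t). hit H \<tau> w \<le> enat t} \<in> sets (F t)"
    unfolding eq by (intro sets.finite_UN) auto
qed

lemma min_stopping:
  assumes st: "is_stopping_time F \<tau>"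
  shows "is_stopping_time F (\<lambda>w. min (\<tau> w) (enat K))"
  unfolding is_stopping_time_def
proof
  fix t
  show "{w \<in> space (F t). min (\<tau> w) (enat K) \<le> enat t} \<in> sets (F t)"
  proof (cases "K \<le> t")
    case True
    then have "{w \<in> space (F t). min (\<tau> w) (enat K) \<le> enat t} = space (F t)" by (auto simp: min_le_iff_disj)
    then show ?thesis by auto
  next
    case False
    then have "{w \<in> space (F t). min (\<tau> w) (enat K) \<le> enat t} = {w\<in>\<Omega>. \<tau> w \<le> enat t}"
      using space_F by (auto simp: min_le_iff_disj)
    then show ?thesis using stop_le_set[OF st] by simp
  qed
qed

lemma stop_meas:
  assumes st: "is_stopping_time F \<tau>" and sM: "\<And>t. sets (F t) \<subseteq> sets M" and spM: "space M = \<Omega>"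
  shows "\<tau> \<in> measurable M (count_space UNIV)"
  unfolding measurable_count_space_eq2_countable
proof (intro conjI ballI)
  show "\<tau> \<in> space M \<rightarrow> UNIV" by simp
  fix a :: enat
  show "\<tau> -` {a} \<inter> space M \<in> sets M"
  proof (cases a)
    case (enat t)
    then have "\<tau> -` {a} \<inter> space M = {w\<in>\<Omega>. \<tau> w = enat t}" using spM by auto
    then show ?thesis using stop_eq_set[OF st, of t] sM[of t] by auto
  next
    case infinity
    then have "\<tau> -` {a} \<inter> space M = space M - (\<Union>t. {w\<in>\<Omega>. \<tau> w \<le> enat t})"
    proof (intro equalityI subsetI)
      fix w assume "w \<in> \<tau> -` {a} \<inter> space M"
      then show "w \<in> space M - (\<Union>t. {w\<in>\<Omega>. \<tau> w \<le> enat t})" using infinity spM by auto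
    next
      fix w assume w: "w \<in> space M - (\<Union>t. {w\<in>\<Omega>. \<tau> w \<le> enat t})"
      show "w \<in> \<tau> -` {a} \<inter> space M"
      proof (cases "\<tau> w")
        case (enat n) then show ?thesis using w spM by auto
      qed (use w infinity in auto)
    qed
    moreover have "(\<Union>t. {w\<in>\<Omega>. \<tau> w \<le> enat t}) \<in> sets M"
      using stop_le_set[OF st] sM by auto
    ultimately show ?thesis by auto
  qed
qed

lemma meas_sub: "sets (F t) \<subseteq> sets M \<Longrightarrow> space M = \<Omega> \<Longrightarrow> f \<in> measurable (F t) N \<Longrightarrow> f \<in> measurable M N"
  by (rule measurable_from_subalg[of M "F t"]) (auto simp: subalgebra_def space_F)

lemma stopped_case_meas:
  assumes st: "is_stopping_time F \<tau>" and sM: "\<And>t. sets (F t) \<subseteq> sets M" and spM: "space M = \<Omega>"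
    and f: "\<And>i. (\<lambda>w. f i w) \<in> measurable M N"
  shows "(\<lambda>w. f (\<tau> w) w) \<in> measurable M N"
  by (rule measurable_compose_countable'[OF f stop_meas[OF st sM spM]]) auto

lemma stopped_p_meas:
  assumes st: "is_stopping_time F \<tau>" and sM: "\<And>t. sets (F t) \<subseteq> sets M" and spM: "space M = \<Omega>"
    and p: "\<And>t. p t \<in> borel_measurable (F t)"
  shows "stopped_p p \<tau> \<in> borel_measurable M"
proof -
  have pM[measurable]: "\<And>t. p t \<in> borel_measurable M" using meas_sub[OF sM spM p] .
  have "(\<lambda>w. (\<lambda>i w. case i of enat t \<Rightarrow> p t w | \<infinity> \<Rightarrow> real_of_ereal (liminf (\<lambda>t. ereal (p t w)))) (\<tau> w) w) \<in> borel_measurable M"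
    by (rule stopped_case_meas[OF st sM spM]) (auto split: enat.splits)
  then show ?thesis unfolding stopped_p_def[abs_def] by simp
qed

lemma stopped_e_meas:
  assumes st: "is_stopping_time F \<tau>" and sM: "\<And>t. sets (F t) \<subseteq> sets M" and spM: "space M = \<Omega>"
    and p: "\<And>t. e t \<in> borel_measurable (F t)"
  shows "stopped_e e \<tau> \<in> borel_measurable M"
proof -
  have pM[measurable]: "\<And>t. e t \<in> borel_measurable M" using meas_sub[OF sM spM p] .
  have "(\<lambda>w. (\<lambda>i w. case i of enat t \<Rightarrow> e t w | \<infinity> \<Rightarrow> limsup (\<lambda>t. e t w)) (\<tau> w) w) \<in> borel_measurable M"
    by (rule stopped_case_meas[OF st sM spM]) (auto split: enat.splits)
  then show ?thesis unfolding stopped_e_def[abs_def] by simp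
qed

lemma limsup_bool: "limsup (f :: nat \<Rightarrow> bool) \<longleftrightarrow> (\<forall>N. \<exists>n\<ge>N. f n)"
  unfolding limsup_INF_SUP by (auto simp: INF_bool_eq SUP_bool_eq)

lemma stopped_test_meas:
  assumes st: "is_stopping_time F \<tau>" and sM: "\<And>t. sets (F t) \<subseteq> sets M" and spM: "space M = \<Omega>"
    and p: "\<And>t. \<psi> t \<in> F t \<rightarrow>\<^sub>M count_space UNIV"
  shows "stopped_test \<psi> \<tau> \<in> M \<rightarrow>\<^sub>M count_space UNIV"
proof -
  have pM[measurable]: "\<And>t. \<psi> t \<in> M \<rightarrow>\<^sub>M count_space UNIV" using meas_sub[OF sM spM p] .
  have "(\<lambda>w. (\<lambda>i w. case i of enat t \<Rightarrow> \<psi> t w | \<infinity> \<Rightarrow> (\<forall>N. \<exists>n\<ge>N. \<psi> n w)) (\<tau> w) w) \<in> M \<rightarrow>\<^sub>M count_space UNIV"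
    by (rule stopped_case_meas[OF st sM spM]) (auto split: enat.splits)
  then show ?thesis unfolding stopped_test_def[abs_def] limsup_bool by simp
qed

end


lemma greedy:
  fixes V :: "'a set" and le :: "'a \<Rightarrow> 'a \<Rightarrow> bool" and \<Phi> :: "nat \<Rightarrow> 'a \<Rightarrow> real"
  assumes trans: "\<And>x y z. le x y \<Longrightarrow> le y z \<Longrightarrow> le x z"
    and refl: "\<And>x. x \<in> V \<Longrightarrow> le x x"
    and mono: "\<And>x y t. x \<in> V \<Longrightarrow> y \<in> V \<Longrightarrow> le x y \<Longrightarrow> \<Phi> t x \<le> \<Phi> t y"
    and bdd: "\<And>x t. x \<in> V \<Longrightarrow> 0 \<le> \<Phi> t x"
    and lim: "\<And>s. (\<And>n. s n \<in> V) \<Longrightarrow> (\<And>n. le (s (Suc n)) (s n)) \<Longrightarrow> \<exists>l\<in>V. \<forall>n. le l (s n)"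
    and x0: "x0 \<in> V"
  shows "\<exists>x\<in>V. le x x0 \<and> (\<forall>y\<in>V. le y x \<longrightarrow> (\<forall>t. \<Phi> t x \<le> \<Phi> t y))"
proof -
  define tt where "tt n = fst (prod_decode n)" for n
  define I where "I n x = Inf (\<Phi> (tt n) ` {y\<in>V. le y x})" for n x
  have step: "\<exists>y. y\<in>V \<and> le y x \<and> \<Phi> (tt n) y < I n x + 1/Suc n" if x: "x \<in> V" for n x
  proof -
    have ne: "\<Phi> (tt n) ` {y\<in>V. le y x} \<noteq> {}" using x refl by auto
    have bb: "bdd_below (\<Phi> (tt n) ` {y\<in>V. le y x})" using bdd by (auto intro!: bdd_belowI[of _ 0])
    have "I n x < I n x + 1/Suc n" by simp
    then obtain z where "z \<in> \<Phi> (tt n) ` {y\<in>V. le y x}" "z < I n x + 1/Suc n"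
      using cInf_less_iff[OF ne bb] unfolding I_def by blast
    then show ?thesis by auto
  qed
  define nx where "nx n x = (SOME y. y\<in>V \<and> le y x \<and> \<Phi> (tt n) y < I n x + 1/Suc n)" for n x
  have nx: "nx n x \<in> V \<and> le (nx n x) x \<and> \<Phi> (tt n) (nx n x) < I n x + 1/Suc n" if "x \<in> V" for n x
    unfolding nx_def using someI_ex[OF step[OF that]] .
  define s where "s = rec_nat x0 nx"
  have s0: "s 0 = x0" and sS: "s (Suc n) = nx n (s n)" for n unfolding s_def by simp_all
  have sV: "s n \<in> V" for n by (induction n) (auto simp: s0 sS x0 nx)
  have sle: "le (s (Suc n)) (s n)" for n using nx[OF sV[of n]] sS by simp
  obtain l where l: "l \<in> V" "\<And>n. le l (s n)" using lim[of s, OF sV sle] by blast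
  have "\<forall>y\<in>V. le y l \<longrightarrow> (\<forall>t. \<Phi> t l \<le> \<Phi> t y)"
  proof (intro ballI impI allI)
    fix y t assume y: "y \<in> V" "le y l"
    show "\<Phi> t l \<le> \<Phi> t y"
    proof (rule field_le_epsilon)
      fix e :: real assume "0 < e"
      then obtain k where k: "inverse (real (Suc k)) < e" using reals_Archimedean by blast
      define n where "n = prod_encode (t, k)"
      have tn: "tt n = t" unfolding tt_def n_def by simp
      have kn: "k \<le> n" unfolding n_def by (rule le_prod_encode_2)
      have ne: "\<Phi> (tt n) ` {y\<in>V. le y (s n)} \<noteq> {}" using sV refl by auto
      have bb: "bdd_below (\<Phi> (tt n) ` {y\<in>V. le y (s n)})" using bdd by (auto intro!: bdd_belowI[of _ 0])
      have "I n (s n) \<le> \<Phi> t y" unfolding I_def using y trans[OF y(2) l(2)[of n]] tn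
        by (intro cInf_lower bb) auto
      moreover have "\<Phi> t (s (Suc n)) < I n (s n) + 1/Suc n" using nx[OF sV[of n], of n] sS[of n] tn by simp
      moreover have "\<Phi> t l \<le> \<Phi> t (s (Suc n))" using mono[OF l(1) sV l(2)] .
      moreover have "1/Suc n \<le> inverse (real (Suc k))" using kn by (simp add: field_simps)
      ultimately show "\<Phi> t l \<le> \<Phi> t y + e" using k by linarith
    qed
  qed
  moreover have "le l x0" using l(2)[of 0] s0 by simp
  ultimately show ?thesis using l(1) by blast
qed



lemma le_eps_nat: fixes x a :: real assumes "\<And>k::nat. x \<le> a + 1/Suc k" shows "x \<le> a"
proof (rule field_le_epsilon)
  fix e :: real assume "0 < e"
  then obtain k where k: "inverse (real (Suc k)) < e" using reals_Archimedean by blast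
  have "x \<le> a + 1/Suc k" by (rule assms)
  moreover have "1/Suc k < e" using k by (simp add: inverse_eq_divide)
  ultimately show "x \<le> a + e" by linarith
qed

lemma (in finite_measure) measure_UN_le:
  assumes "range B \<subseteq> sets M" "incseq B" "\<And>n. measure M (B n) \<le> c"
  shows "measure M (\<Union>n. B n) \<le> c"
  using LIMSEQ_le_const2[OF finite_Lim_measure_incseq[OF assms(1,2)]] assms(3) by blast

locale setting = filt \<Omega> F for \<Omega> :: "'w set" and F +
  fixes \<Q> :: "'w measure set" and R :: "'w measure" and Finf :: "'w measure"
  assumes Q_prob: "Q \<in> \<Q> \<Longrightarrow> prob_space Q" and Q_sets: "Q \<in> \<Q> \<Longrightarrow> sets Q = sets Finf"
    and F_sub: "sets (F t) \<subseteq> sets Finf" and space_Finf: "space Finf = \<Omega>"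
    and R_prob: "prob_space R" and R_sets: "sets R = sets Finf"
    and locdom: "\<And>t Q A. Q \<in> \<Q> \<Longrightarrow> A \<in> sets (F t) \<Longrightarrow> emeasure R A = 0 \<Longrightarrow> emeasure Q A = 0"
begin

lemma Q_space: "Q \<in> \<Q> \<Longrightarrow> space Q = \<Omega>"
  using sets_eq_imp_space_eq[OF Q_sets] space_Finf by simp

lemma R_space: "space R = \<Omega>"
  using sets_eq_imp_space_eq[OF R_sets] space_Finf by simp

lemma Q_sub: "Q \<in> \<Q> \<Longrightarrow> sets (F t) \<subseteq> sets Q"
  using Q_sets F_sub by simp

lemma R_sub: "sets (F t) \<subseteq> sets R"
  using R_sets F_sub by simp

lemma R_meas: "f \<in> measurable (F t) N \<Longrightarrow> f \<in> measurable R N"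
  using meas_sub[OF R_sub R_space] by blast

lemma Q_meas: "Q \<in> \<Q> \<Longrightarrow> f \<in> measurable (F t) N \<Longrightarrow> f \<in> measurable Q N"
  using meas_sub[OF Q_sub Q_space] by blast

lemma R_pos: assumes "Q \<in> \<Q>" "A \<in> sets (F t)" "measure Q A > 0" shows "emeasure R A \<noteq> 0"
  using locdom[OF assms(1,2)] assms(3) by (auto simp: measure_def)

lemma ge_set_Q: "Q \<in> \<Q> \<Longrightarrow> is_stopping_time F \<tau> \<Longrightarrow> {w\<in>\<Omega>. enat t \<le> \<tau> w} \<in> sets Q"
  using stop_ge_set Q_sub by blast

definition leP :: "(nat \<Rightarrow> 'w \<Rightarrow> real) \<Rightarrow> (nat \<Rightarrow> 'w \<Rightarrow> real) \<Rightarrow> bool" where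
  "leP q q' \<longleftrightarrow> (\<forall>t. \<forall>w\<in>\<Omega>. q t w \<le> q' t w)"

lemma valid_lim_p:
  assumes V: "\<And>n. valid_p F \<Q> (s n)" and dec: "\<And>n. leP (s (Suc n)) (s n)"
  shows "valid_p F \<Q> (\<lambda>t w. INF n. s n t w) \<and> (\<forall>n. leP (\<lambda>t w. INF n. s n t w) (s n))"
proof -
  define l where "l = (\<lambda>t w. INF n. s n t w)"
  have meas: "\<And>n t. s n t \<in> borel_measurable (F t)" and rng: "\<And>n t w. w \<in> \<Omega> \<Longrightarrow> 0 \<le> s n t w \<and> s n t w \<le> 1"
    using V space_F unfolding valid_p_def by auto
  have bdd: "bdd_below (range (\<lambda>n. s n t w))" if "w \<in> \<Omega>" for t w
    using rng[OF that] by (auto intro!: bdd_belowI[of _ 0])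
  have anti: "s m t w \<le> s n t w" if "n \<le> m" "w \<in> \<Omega>" for n m t w
  proof -
    have "antimono (\<lambda>n. s n t w)" using dec \<open>w \<in> \<Omega>\<close> unfolding leP_def
      by (intro antimonoI) (auto intro: lift_Suc_antimono_le[of "\<lambda>n. s n t w"])
    then show ?thesis using that(1) by (auto simp: antimono_def)
  qed
  have lle: "l t w \<le> s n t w" if "w \<in> \<Omega>" for n t w
    unfolding l_def using bdd[OF that] by (intro cINF_lower) auto
  have lrng: "0 \<le> l t w \<and> l t w \<le> 1" if "w \<in> \<Omega>" for t w
  proof
    show "0 \<le> l t w" unfolding l_def using rng[OF that] by (auto intro!: cINF_greatest)
    show "l t w \<le> 1" using lle[OF that, of t 0] rng[OF that, of 0 t] by linarith
  qed
  have lmeas: "l t \<in> borel_measurable (F t)" for t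
    unfolding l_def using meas by (intro borel_measurable_cINF_real) auto
  have valid: "measure Q {w \<in> space Q. stopped_p l \<tau> w \<le> \<alpha>} \<le> \<alpha>"
    if st: "is_stopping_time F \<tau>" and Q: "Q \<in> \<Q>" and a0: "0 \<le> \<alpha>" and a1: "\<alpha> \<le> 1" for \<tau> Q \<alpha>
  proof -
    interpret Q: prob_space Q using Q_prob[OF Q] .
    have spQ: "space Q = \<Omega>" using Q_space[OF Q] .
    let ?E = "{w \<in> space Q. stopped_p l \<tau> w \<le> \<alpha>}"
    have "measure Q ?E \<le> \<alpha> + 1/Suc k" for k
    proof -
      define \<beta> where "\<beta> = \<alpha> + 1/Suc k"
      have ab: "\<alpha> < \<beta>" unfolding \<beta>_def by simp
      define B where "B n = {w\<in>\<Omega>. \<exists>t. enat t \<le> \<tau> w \<and> s n t w < \<beta>}" for n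
      have Bsets: "B n \<in> sets Q" for n
      proof -
        have "B n = (\<Union>t. {w\<in>\<Omega>. enat t \<le> \<tau> w} \<inter> {w\<in>space (F t). s n t w < \<beta>})"
          unfolding B_def using space_F by auto
        moreover have "{w\<in>space (F t). s n t w < \<beta>} \<in> sets Q" for t
          using Q_sub[OF Q] meas[of n t] by (auto intro!: set_mp[OF _ borel_measurable_less[OF _ borel_measurable_const]])
        ultimately show ?thesis using ge_set_Q[OF Q st] by auto
      qed
      have Binc: "incseq B" unfolding B_def incseq_def using anti
        by auto (meson le_less_trans)
      have Ble: "measure Q (B n) \<le> \<beta>" for n
      proof (cases "\<beta> \<le> 1")
        case False then show ?thesis using Q.prob_le_1[of "B n"] by linarith
      next
        case True
        define H where "H t = {w\<in>space (F t). s n t w < \<beta>}" for t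
        have Hs: "H t \<in> sets (F t)" for t unfolding H_def using meas[of n t] by measurable
        define \<rho> where "\<rho> = hit H \<tau>"
        have st\<rho>: "is_stopping_time F \<rho>" unfolding \<rho>_def by (rule hit_stopping[OF Hs st])
        have "B n \<subseteq> {w \<in> space Q. stopped_p (s n) \<rho> w \<le> \<beta>}"
        proof
          fix w assume w: "w \<in> B n"
          then obtain t where t: "w \<in> \<Omega>" "enat t \<le> \<tau> w" "s n t w < \<beta>" unfolding B_def by auto
          then have "w \<in> H t" unfolding H_def using space_F by auto
          from hit_props[of t \<tau> w H, OF t(2) this] obtain m where "\<rho> w = enat m" "w \<in> H m"
            unfolding \<rho>_def by auto
          then show "w \<in> {w \<in> space Q. stopped_p (s n) \<rho> w \<le> \<beta>}"
            using t spQ unfolding H_def stopped_p_def by auto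
        qed
        moreover have "{w \<in> space Q. stopped_p (s n) \<rho> w \<le> \<beta>} \<in> sets Q"
          using stopped_p_meas[OF st\<rho> Q_sub[OF Q] spQ meas] by measurable
        ultimately have "measure Q (B n) \<le> measure Q {w \<in> space Q. stopped_p (s n) \<rho> w \<le> \<beta>}"
          by (rule Q.finite_measure_mono)
        also have "\<dots> \<le> \<beta>" using V[of n] st\<rho> Q True ab a0 unfolding valid_p_def by auto
        finally show ?thesis .
      qed
      have "?E \<subseteq> (\<Union>n. B n)"
      proof
        fix w assume w: "w \<in> ?E"
        then have wO: "w \<in> \<Omega>" using spQ by auto
        show "w \<in> (\<Union>n. B n)"
        proof (cases "\<tau> w")
          case (enat t)
          then have "l t w < \<beta>" using w ab unfolding stopped_p_def by auto
          then obtain n where "s n t w < \<beta>" unfolding l_def using cINF_less_iff[OF _ bdd[OF wO]] by auto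
          then show ?thesis using enat wO unfolding B_def by auto
        next
          case infinity
          have "\<exists>t. l t w < \<beta>"
          proof (rule ccontr)
            assume "\<not> (\<exists>t. l t w < \<beta>)"
            then have ge: "\<And>t. \<beta> \<le> l t w" by (simp add: not_less)
            have L1: "ereal \<beta> \<le> liminf (\<lambda>t. ereal (l t w))"
              using ge by (intro Liminf_bounded) auto
            have "liminf (\<lambda>t. ereal (l t w)) \<le> limsup (\<lambda>t. ereal (l t w))"
              by (rule Liminf_le_Limsup) simp
            also have "\<dots> \<le> ereal 1" using lrng[OF wO] by (intro Limsup_bounded) auto
            finally have "\<beta> \<le> real_of_ereal (liminf (\<lambda>t. ereal (l t w)))"
              using L1 by (cases "liminf (\<lambda>t. ereal (l t w))") auto
            then show False using w infinity ab unfolding stopped_p_def by auto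
          qed
          then obtain t n where "s n t w < \<beta>" unfolding l_def using cINF_less_iff[OF _ bdd[OF wO]] by blast
          then show ?thesis using infinity wO unfolding B_def by auto
        qed
      qed
      then have "measure Q ?E \<le> measure Q (\<Union>n. B n)"
        by (rule Q.finite_measure_mono) (use Bsets in auto)
      also have "\<dots> \<le> \<beta>" by (rule Q.measure_UN_le) (use Bsets Binc Ble in auto)
      finally show ?thesis unfolding \<beta>_def .
    qed
    then show ?thesis by (rule le_eps_nat)
  qed
  have "valid_p F \<Q> l" unfolding valid_p_def using lmeas lrng valid space_F by auto
  moreover have "\<forall>n. leP l (s n)" unfolding leP_def using lle by auto
  ultimately show ?thesis unfolding l_def by simp
qed

end


context setting begin

lemma R_int: fixes f :: "'w \<Rightarrow> real" and B :: real assumes "f \<in> borel_measurable (F t)" "\<And>w. w \<in> \<Omega> \<Longrightarrow> \<bar>f w\<bar> \<le> B"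
  shows "integrable R f"
proof -
  interpret R: prob_space R by (rule R_prob)
  show ?thesis using assms R_space by (intro R.integrable_const_bound[where B=B] R_meas) auto
qed

lemma p_min_valid:
  assumes v2: "valid_p F \<Q> p2" and v1: "valid_p F \<Q> p1" and d: "dominates_p \<Q> p2 p1"
  shows "valid_p F \<Q> (\<lambda>t w. min (p2 t w) (p1 t w))"
proof -
  let ?p3 = "\<lambda>t w. min (p2 t w) (p1 t w)"
  have m: "\<And>t. p2 t \<in> borel_measurable (F t)" "\<And>t. p1 t \<in> borel_measurable (F t)"
    using v1 v2 unfolding valid_p_def by auto
  have "\<forall>t. ?p3 t \<in> borel_measurable (F t)" using m by (intro allI borel_measurable_min) auto
  moreover have "\<forall>t. \<forall>w\<in>space (F t). 0 \<le> ?p3 t w \<and> ?p3 t w \<le> 1"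
    using v1 v2 unfolding valid_p_def by (auto simp: min_def)
  moreover have "measure Q {w \<in> space Q. stopped_p ?p3 \<tau> w \<le> \<alpha>} \<le> \<alpha>"
    if st: "is_stopping_time F \<tau>" and Q: "Q \<in> \<Q>" and a: "0 \<le> \<alpha>" "\<alpha> \<le> 1" for \<tau> Q \<alpha>
  proof -
    have "AE w in Q. \<forall>t. p2 t w \<le> p1 t w" using d Q unfolding dominates_p_def by (simp add: AE_all_countable)
    then have ae: "AE w in Q. stopped_p ?p3 \<tau> w = stopped_p p2 \<tau> w"
    proof (rule AE_mp, intro AE_I2 impI)
      fix w assume "\<forall>t. p2 t w \<le> p1 t w"
      then have pt: "\<And>t. min (p2 t w) (p1 t w) = p2 t w" by (auto simp: min_def)
      show "stopped_p ?p3 \<tau> w = stopped_p p2 \<tau> w" unfolding stopped_p_def by (simp only: pt)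
    qed
    have meas3: "stopped_p ?p3 \<tau> \<in> borel_measurable Q"
      using m by (intro stopped_p_meas[OF st Q_sub[OF Q] Q_space[OF Q]]) measurable
    have meas2: "stopped_p p2 \<tau> \<in> borel_measurable Q"
      using m by (intro stopped_p_meas[OF st Q_sub[OF Q] Q_space[OF Q]])
    have "measure Q {w \<in> space Q. stopped_p ?p3 \<tau> w \<le> \<alpha>} = measure Q {w \<in> space Q. stopped_p p2 \<tau> w \<le> \<alpha>}"
      using ae meas2 meas3 by (intro measure_eq_AE) auto
    also have "\<dots> \<le> \<alpha>" using v2 st Q a unfolding valid_p_def by auto
    finally show ?thesis .
  qed
  ultimately show ?thesis unfolding valid_p_def by blast
qed

theorem p_part:
  assumes p: "valid_p F \<Q> p"
  shows "\<exists>p'. admissible_p F \<Q> p' \<and> dominates_p \<Q> p' p"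
proof -
  interpret R: prob_space R by (rule R_prob)
  define \<Phi> where "\<Phi> t q = (\<integral>w. q t w \<partial>R)" for t and q :: "nat \<Rightarrow> 'w \<Rightarrow> real"
  have int: "integrable R (q t)" if "valid_p F \<Q> q" for q t
    using that space_F unfolding valid_p_def by (intro R_int[where B=1]) auto
  have "\<exists>x\<in>{q. valid_p F \<Q> q}. leP x p \<and> (\<forall>y\<in>{q. valid_p F \<Q> q}. leP y x \<longrightarrow> (\<forall>t. \<Phi> t x \<le> \<Phi> t y))"
  proof (rule greedy)
    show "leP x z" if "leP x y" "leP y z" for x y z using that unfolding leP_def by (meson order_trans)
    show "leP x x" for x unfolding leP_def by auto
    show "\<Phi> t x \<le> \<Phi> t y" if "x \<in> {q. valid_p F \<Q> q}" "y \<in> {q. valid_p F \<Q> q}" "leP x y" for x y t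
      unfolding \<Phi>_def using that int R_space unfolding leP_def by (intro integral_mono) auto
    show "0 \<le> \<Phi> t x" if "x \<in> {q. valid_p F \<Q> q}" for x t
      unfolding \<Phi>_def using that R_space space_F unfolding valid_p_def by (intro Bochner_Integration.integral_nonneg) auto
    show "\<exists>l\<in>{q. valid_p F \<Q> q}. \<forall>n. leP l (s n)"
      if "\<And>n. s n \<in> {q. valid_p F \<Q> q}" "\<And>n. leP (s (Suc n)) (s n)" for s
      using valid_lim_p[of s] that by blast
  qed (use p in auto)
  then obtain x where xv: "valid_p F \<Q> x" and xp: "leP x p"
    and xmin: "\<And>y t. valid_p F \<Q> y \<Longrightarrow> leP y x \<Longrightarrow> \<Phi> t x \<le> \<Phi> t y" by blast
  have "admissible_p F \<Q> x"
    unfolding admissible_p_def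
  proof (intro conjI xv notI)
    assume "\<exists>p'. valid_p F \<Q> p' \<and> dominates_p \<Q> p' x \<and> (\<exists>t. \<exists>Q\<in>\<Q>. 0 < measure Q {w \<in> space Q. p' t w < x t w})"
    then obtain p2 t Q where v2: "valid_p F \<Q> p2" and d: "dominates_p \<Q> p2 x" and Q: "Q \<in> \<Q>"
      and pos: "0 < measure Q {w \<in> space Q. p2 t w < x t w}" by blast
    define p3 where "p3 = (\<lambda>t w. min (p2 t w) (x t w))"
    have v3: "valid_p F \<Q> p3" unfolding p3_def by (rule p_min_valid[OF v2 xv d])
    have "leP p3 x" unfolding leP_def p3_def by auto
    then have ge: "\<Phi> t x \<le> \<Phi> t p3" using xmin[OF v3] by blast
    define A where "A = {w \<in> space (F t). p2 t w < x t w}"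
    have [measurable]: "p2 t \<in> borel_measurable (F t)" "x t \<in> borel_measurable (F t)"
      using v2 xv unfolding valid_p_def by auto
    have AF: "A \<in> sets (F t)" unfolding A_def by measurable
    have "A = {w \<in> space Q. p2 t w < x t w}" unfolding A_def using Q_space[OF Q] space_F by simp
    then have "emeasure R A \<noteq> 0" using R_pos[OF Q AF] pos by simp
    then have "\<Phi> t p3 < \<Phi> t x" unfolding \<Phi>_def
      using int[OF v3] int[OF xv] R_sub[of t] AF R_space
      by (intro R.integral_less_AE[where A=A]) (auto simp: p3_def A_def space_F)
    with ge show False by simp
  qed
  moreover have "dominates_p \<Q> x p" unfolding dominates_p_def
    using xp Q_space unfolding leP_def by (auto intro!: AE_I2)
  ultimately show ?thesis by blast
qed

end


context setting begin

definition leT :: "(nat \<Rightarrow> 'w \<Rightarrow> bool) \<Rightarrow> (nat \<Rightarrow> 'w \<Rightarrow> bool) \<Rightarrow> bool" where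
  "leT q q' \<longleftrightarrow> (\<forall>t. \<forall>w\<in>\<Omega>. q' t w \<longrightarrow> q t w)"

lemma valid_lim_test:
  assumes V: "\<And>n. seq_test F \<Q> \<alpha> (s n)" and dec: "\<And>n. leT (s (Suc n)) (s n)"
  shows "seq_test F \<Q> \<alpha> (\<lambda>t w. \<exists>n. s n t w) \<and> (\<forall>n. leT (\<lambda>t w. \<exists>n. s n t w) (s n))"
proof -
  define l where "l = (\<lambda>t w. \<exists>n. s n t w)"
  have meas[measurable]: "\<And>n t. s n t \<in> F t \<rightarrow>\<^sub>M count_space UNIV"
    using V unfolding seq_test_def by auto
  have anti: "s n t w \<Longrightarrow> s m t w" if "n \<le> m" "w \<in> \<Omega>" for n m t w
    using that(1)
  proof (induction m)
    case (Suc m) then show ?case using dec[of m] \<open>w \<in> \<Omega>\<close> unfolding leT_def by (auto simp: le_Suc_eq)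
  qed auto
  have lmeas: "l t \<in> F t \<rightarrow>\<^sub>M count_space UNIV" for t
    unfolding l_def by measurable
  have valid: "measure Q {w \<in> space Q. stopped_test l \<tau> w} \<le> \<alpha>"
    if st: "is_stopping_time F \<tau>" and Q: "Q \<in> \<Q>" for \<tau> Q
  proof -
    interpret Q: prob_space Q using Q_prob[OF Q] .
    have spQ: "space Q = \<Omega>" using Q_space[OF Q] .
    let ?E = "{w \<in> space Q. stopped_test l \<tau> w}"
    define B where "B n = {w\<in>\<Omega>. \<exists>t. enat t \<le> \<tau> w \<and> s n t w}" for n
    have Bsets: "B n \<in> sets Q" for n
    proof -
      have "B n = (\<Union>t. {w\<in>\<Omega>. enat t \<le> \<tau> w} \<inter> {w\<in>space (F t). s n t w})"
        unfolding B_def using space_F by auto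
      moreover have "{w\<in>space (F t). s n t w} \<in> sets Q" for t
        using Q_sub[OF Q] by (rule subsetD) measurable
      ultimately show ?thesis using ge_set_Q[OF Q st] by auto
    qed
    have Binc: "incseq B" unfolding B_def incseq_def using anti by blast
    have Ble: "measure Q (B n) \<le> \<alpha>" for n
    proof -
      define H where "H t = {w\<in>space (F t). s n t w}" for t
      have Hs: "H t \<in> sets (F t)" for t unfolding H_def by measurable
      define \<rho> where "\<rho> = hit H \<tau>"
      have st\<rho>: "is_stopping_time F \<rho>" unfolding \<rho>_def by (rule hit_stopping[OF Hs st])
      have "B n \<subseteq> {w \<in> space Q. stopped_test (s n) \<rho> w}"
      proof
        fix w assume w: "w \<in> B n"
        then obtain t where t: "w \<in> \<Omega>" "enat t \<le> \<tau> w" "s n t w" unfolding B_def by auto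
        then have "w \<in> H t" unfolding H_def using space_F by auto
        from hit_props[of t \<tau> w H, OF t(2) this] obtain m where "\<rho> w = enat m" "w \<in> H m"
          unfolding \<rho>_def by auto
        then show "w \<in> {w \<in> space Q. stopped_test (s n) \<rho> w}"
          using t spQ unfolding H_def stopped_test_def by auto
      qed
      moreover have "{w \<in> space Q. stopped_test (s n) \<rho> w} \<in> sets Q"
        using stopped_test_meas[OF st\<rho> Q_sub[OF Q] spQ meas] by measurable
      ultimately have "measure Q (B n) \<le> measure Q {w \<in> space Q. stopped_test (s n) \<rho> w}"
        by (rule Q.finite_measure_mono)
      also have "\<dots> \<le> \<alpha>" using V[of n] st\<rho> Q unfolding seq_test_def by auto
      finally show ?thesis .
    qed
    have "?E \<subseteq> (\<Union>n. B n)"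
    proof
      fix w assume w: "w \<in> ?E"
      then have wO: "w \<in> \<Omega>" using spQ by auto
      show "w \<in> (\<Union>n. B n)"
      proof (cases "\<tau> w")
        case (enat t)
        then have "l t w" using w unfolding stopped_test_def by auto
        then obtain n where "s n t w" unfolding l_def by auto
        then show ?thesis using enat wO unfolding B_def by auto
      next
        case infinity
        then have "\<exists>t. l t w" using w unfolding stopped_test_def limsup_bool by auto
        then obtain t n where "s n t w" unfolding l_def by blast
        then show ?thesis using infinity wO unfolding B_def by auto
      qed
    qed
    then have "measure Q ?E \<le> measure Q (\<Union>n. B n)"
      by (rule Q.finite_measure_mono) (use Bsets in auto)
    also have "\<dots> \<le> \<alpha>" by (rule Q.measure_UN_le) (use Bsets Binc Ble in auto)
    finally show ?thesis .
  qed
  have "seq_test F \<Q> \<alpha> l" unfolding seq_test_def using lmeas valid by auto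
  moreover have "\<forall>n. leT l (s n)" unfolding leT_def l_def by auto
  ultimately show ?thesis unfolding l_def by simp
qed

lemma test_or_valid:
  assumes v2: "seq_test F \<Q> \<alpha> p2" and v1: "seq_test F \<Q> \<alpha> p1" and d: "dominates_test \<Q> p2 p1"
  shows "seq_test F \<Q> \<alpha> (\<lambda>t w. p2 t w \<or> p1 t w)"
proof -
  let ?p3 = "\<lambda>t w. p2 t w \<or> p1 t w"
  have m[measurable]: "\<And>t. p2 t \<in> F t \<rightarrow>\<^sub>M count_space UNIV" "\<And>t. p1 t \<in> F t \<rightarrow>\<^sub>M count_space UNIV"
    using v1 v2 unfolding seq_test_def by auto
  have m3: "\<And>t. ?p3 t \<in> F t \<rightarrow>\<^sub>M count_space UNIV" by measurable
  moreover have "measure Q {w \<in> space Q. stopped_test ?p3 \<tau> w} \<le> \<alpha>"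
    if st: "is_stopping_time F \<tau>" and Q: "Q \<in> \<Q>" for \<tau> Q
  proof -
    have "AE w in Q. \<forall>t. p1 t w \<le> p2 t w" using d Q unfolding dominates_test_def by (simp add: AE_all_countable)
    then have ae: "AE w in Q. stopped_test ?p3 \<tau> w = stopped_test p2 \<tau> w"
    proof (rule AE_mp, intro AE_I2 impI)
      fix w assume "\<forall>t. p1 t w \<le> p2 t w"
      then have pt: "\<And>t. (p2 t w \<or> p1 t w) = p2 t w" by (auto simp: le_bool_def)
      show "stopped_test ?p3 \<tau> w = stopped_test p2 \<tau> w" unfolding stopped_test_def by (simp only: pt)
    qed
    have meas3: "stopped_test ?p3 \<tau> \<in> Q \<rightarrow>\<^sub>M count_space UNIV"
      using m3 by (intro stopped_test_meas[OF st Q_sub[OF Q] Q_space[OF Q]])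
    have meas2: "stopped_test p2 \<tau> \<in> Q \<rightarrow>\<^sub>M count_space UNIV"
      using m by (intro stopped_test_meas[OF st Q_sub[OF Q] Q_space[OF Q]])
    have "measure Q {w \<in> space Q. stopped_test ?p3 \<tau> w} = measure Q {w \<in> space Q. stopped_test p2 \<tau> w}"
      using ae meas2 meas3 by (intro measure_eq_AE) auto
    also have "\<dots> \<le> \<alpha>" using v2 st Q unfolding seq_test_def by auto
    finally show ?thesis .
  qed
  ultimately show ?thesis unfolding seq_test_def by blast
qed

theorem test_part:
  assumes p: "seq_test F \<Q> \<alpha> p"
  shows "\<exists>p'. admissible_test F \<Q> \<alpha> p' \<and> dominates_test \<Q> p' p"
proof -
  interpret R: prob_space R by (rule R_prob)
  define \<Phi> where "\<Phi> t q = measure R {w \<in> space (F t). \<not> q t w}" for t and q :: "nat \<Rightarrow> 'w \<Rightarrow> bool"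
  have Ns: "{w \<in> space (F t). \<not> q t w} \<in> sets R" if "seq_test F \<Q> \<alpha> q" for q t
  proof -
    have [measurable]: "q t \<in> F t \<rightarrow>\<^sub>M count_space UNIV" using that unfolding seq_test_def by auto
    show ?thesis using R_sub by (rule subsetD) measurable
  qed
  have "\<exists>x\<in>{q. seq_test F \<Q> \<alpha> q}. leT x p \<and> (\<forall>y\<in>{q. seq_test F \<Q> \<alpha> q}. leT y x \<longrightarrow> (\<forall>t. \<Phi> t x \<le> \<Phi> t y))"
  proof (rule greedy)
    show "leT x z" if "leT x y" "leT y z" for x y z using that unfolding leT_def by blast
    show "leT x x" for x unfolding leT_def by auto
    show "\<Phi> t x \<le> \<Phi> t y" if "x \<in> {q. seq_test F \<Q> \<alpha> q}" "y \<in> {q. seq_test F \<Q> \<alpha> q}" "leT x y" for x y t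
      unfolding \<Phi>_def using that Ns space_F unfolding leT_def by (intro R.finite_measure_mono) auto
    show "0 \<le> \<Phi> t x" for x t unfolding \<Phi>_def by simp
    show "\<exists>l\<in>{q. seq_test F \<Q> \<alpha> q}. \<forall>n. leT l (s n)"
      if "\<And>n. s n \<in> {q. seq_test F \<Q> \<alpha> q}" "\<And>n. leT (s (Suc n)) (s n)" for s
      using valid_lim_test[of \<alpha> s] that by blast
  qed (use p in auto)
  then obtain x where xv: "seq_test F \<Q> \<alpha> x" and xp: "leT x p"
    and xmin: "\<And>y t. seq_test F \<Q> \<alpha> y \<Longrightarrow> leT y x \<Longrightarrow> \<Phi> t x \<le> \<Phi> t y" by blast
  have "admissible_test F \<Q> \<alpha> x"
    unfolding admissible_test_def
  proof (intro conjI xv notI)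
    assume "\<exists>p'. seq_test F \<Q> \<alpha> p' \<and> dominates_test \<Q> p' x \<and> (\<exists>t. \<exists>Q\<in>\<Q>. 0 < measure Q {w \<in> space Q. x t w < p' t w})"
    then obtain p2 t Q where v2: "seq_test F \<Q> \<alpha> p2" and d: "dominates_test \<Q> p2 x" and Q: "Q \<in> \<Q>"
      and pos: "0 < measure Q {w \<in> space Q. x t w < p2 t w}" by blast
    define p3 where "p3 = (\<lambda>t w. p2 t w \<or> x t w)"
    have v3: "seq_test F \<Q> \<alpha> p3" unfolding p3_def by (rule test_or_valid[OF v2 xv d])
    have "leT p3 x" unfolding leT_def p3_def by auto
    then have ge: "\<Phi> t x \<le> \<Phi> t p3" using xmin[OF v3] by blast
    have [measurable]: "p2 t \<in> F t \<rightarrow>\<^sub>M count_space UNIV" "x t \<in> F t \<rightarrow>\<^sub>M count_space UNIV"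
      using v2 xv unfolding seq_test_def by auto
    define A where "A = {w \<in> space (F t). x t w < p2 t w}"
    have AF: "A \<in> sets (F t)" unfolding A_def by measurable
    have "A = {w \<in> space Q. x t w < p2 t w}" unfolding A_def using Q_space[OF Q] space_F by simp
    then have "emeasure R A \<noteq> 0" using R_pos[OF Q AF] pos by simp
    then have Apos: "0 < measure R A" using R.emeasure_eq_measure[of A]
      by (metis ennreal_0 measure_nonneg order_less_le)
    have split: "{w \<in> space (F t). \<not> x t w} = {w \<in> space (F t). \<not> p3 t w} \<union> A"
      unfolding A_def p3_def by auto
    have "\<Phi> t x = \<Phi> t p3 + measure R A"
      unfolding \<Phi>_def split using AF R_sub[of t]
      by (intro R.finite_measure_Union[OF Ns[OF v3]]) (auto simp: A_def p3_def)
    with ge Apos show False by simp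
  qed
  moreover have "dominates_test \<Q> x p" unfolding dominates_test_def
    using xp Q_space unfolding leT_def by (auto intro!: AE_I2)
  ultimately show ?thesis by blast
qed

end


context filt begin

lemma approx_set:
  assumes gen: "sets M = sigma_sets \<Omega> (\<Union>t. sets (F t))" and fm: "finite_measure M"
    and A: "A \<in> sets M"
  shows "\<forall>e>0. \<exists>N B. B \<in> sets (F N) \<and> measure M ((A - B) \<union> (B - A)) < e"
proof -
  interpret finite_measure M by (rule fm)
  have G: "(\<Union>t. sets (F t)) \<subseteq> Pow \<Omega>" using sets.sets_into_space space_F by blast
  have IS: "Int_stable (\<Union>t. sets (F t))"
  proof (rule Int_stableI)
    fix a b assume "a \<in> (\<Union>t. sets (F t))" "b \<in> (\<Union>t. sets (F t))"
    then obtain s t where "a \<in> sets (F s)" "b \<in> sets (F t)" by auto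
    then have "a \<in> sets (F (max s t))" "b \<in> sets (F (max s t))" using mono_F[of s "max s t"] mono_F[of t "max s t"] by auto
    then show "a \<inter> b \<in> (\<Union>t. sets (F t))" by blast
  qed
  have sM: "sigma_sets \<Omega> (\<Union>t. sets (F t)) = sets M" using gen by simp
  from A have "A \<in> sigma_sets \<Omega> (\<Union>t. sets (F t))" using gen by simp
  with IS G show ?thesis
  proof (induct rule: sigma_sets_induct_disjoint)
    case (basic A)
    then obtain t where "A \<in> sets (F t)" by auto
    then show ?case by (intro allI impI exI[of _ t] exI[of _ A]) auto
  next
    case empty
    show ?case by (intro allI impI exI[of _ 0] exI[of _ "{}"]) auto
  next
    case (compl A)
    show ?case
    proof (intro allI impI)
      fix e :: real assume e: "0 < e"
      then obtain N B where B: "B \<in> sets (F N)" "measure M ((A - B) \<union> (B - A)) < e" using compl(2) by blast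
      have "A \<subseteq> \<Omega>" using sigma_sets_into_sp[OF G compl(1)] .
      moreover have "B \<subseteq> \<Omega>" using sets.sets_into_space[OF B(1)] space_F by auto
      ultimately have "((\<Omega> - A) - (\<Omega> - B)) \<union> ((\<Omega> - B) - (\<Omega> - A)) = (A - B) \<union> (B - A)" by blast
      moreover have "\<Omega> - B \<in> sets (F N)" using B(1) space_F[of N] by (metis sets.compl_sets)
      ultimately show "\<exists>N B. B \<in> sets (F N) \<and> measure M (((\<Omega> - A) - B) \<union> (B - (\<Omega> - A))) < e"
        using B(2) by metis
    qed
  next
    case (union A)
    show ?case
    proof (intro allI impI)
      fix e :: real assume e: "0 < e"
      have AM: "A i \<in> sets M" for i using union(2) sM by auto
      define V where "V n = (\<Union>i<n. A i)" for n
      have VM: "V n \<in> sets M" for n unfolding V_def using AM by auto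
      have "incseq V" unfolding V_def incseq_def by (auto intro: order_less_le_trans)
      moreover have "(\<Union>n. V n) = (\<Union>i. A i)" unfolding V_def by auto
      ultimately have lim: "(\<lambda>n. measure M (V n)) \<longlonglongrightarrow> measure M (\<Union>i. A i)"
        using finite_Lim_measure_incseq[of V] VM by auto
      have "\<exists>no. \<forall>n\<ge>no. \<bar>measure M (V n) - measure M (\<Union>i. A i)\<bar> < e/2"
      proof -
        have "\<forall>r>0. \<exists>no. \<forall>n\<ge>no. \<bar>measure M (V n) - measure M (\<Union>i. A i)\<bar> < r"
          using lim unfolding LIMSEQ_iff by (simp add: real_norm_def)
        moreover have "(0::real) < e/2" using e by simp
        ultimately show ?thesis by blast
      qed
      then obtain n where n: "\<bar>measure M (V n) - measure M (\<Union>i. A i)\<bar> < e/2" by blast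
      define e' where "e' = e / (2 * (real n + 1))"
      have e': "0 < e'" unfolding e'_def using e by simp
      have "\<forall>i. \<exists>N B. B \<in> sets (F N) \<and> measure M ((A i - B) \<union> (B - A i)) < e'" using union(3) e' by blast
      then obtain NN BB where NB: "\<And>i. BB i \<in> sets (F (NN i))" "\<And>i. measure M ((A i - BB i) \<union> (BB i - A i)) < e'"
        by metis
      define N where "N = Max (NN ` {..<n})"
      define B where "B = (\<Union>i<n. BB i)"
      have BN: "B \<in> sets (F N)" unfolding B_def
      proof (intro sets.finite_UN ballI, simp)
        fix i assume "i \<in> {..<n}"
        then have "NN i \<le> N" unfolding N_def by (auto intro!: Max_ge)
        then show "BB i \<in> sets (F N)" using NB(1)[of i] mono_F by blast
      qed
      have BM: "BB i \<in> sets M" for i using NB(1)[of i] sM by auto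
      let ?D = "\<lambda>i. (A i - BB i) \<union> (BB i - A i)"
      have sub: "((\<Union>i. A i) - B) \<union> (B - (\<Union>i. A i)) \<subseteq> ((\<Union>i. A i) - V n) \<union> (\<Union>i<n. ?D i)"
        unfolding B_def V_def by blast
      have DM: "?D i \<in> sets M" for i using AM BM by auto
      have UM: "(\<Union>i. A i) \<in> sets M" using AM by auto
      have "measure M (((\<Union>i. A i) - B) \<union> (B - (\<Union>i. A i))) \<le> measure M (((\<Union>i. A i) - V n) \<union> (\<Union>i<n. ?D i))"
        using sub DM UM VM by (intro finite_measure_mono) auto
      also have "\<dots> \<le> measure M ((\<Union>i. A i) - V n) + measure M (\<Union>i<n. ?D i)"
        using DM UM VM by (intro measure_subadditive) auto
      also have "measure M ((\<Union>i. A i) - V n) = measure M (\<Union>i. A i) - measure M (V n)"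
        using UM VM by (intro finite_measure_Diff) (auto simp: V_def)
      also have "measure M (\<Union>i<n. ?D i) \<le> (\<Sum>i<n. measure M (?D i))"
        using DM by (intro finite_measure_subadditive_finite) auto
      also have "(\<Sum>i<n. measure M (?D i)) \<le> (\<Sum>i<n. e')"
        using NB(2) by (intro sum_mono) (simp add: less_imp_le)
      also have "(\<Sum>i<n. e') = real n * e'" by simp
      also have "real n * e' < e / 2" unfolding e'_def using e by (simp add: field_simps)
      finally have "measure M (((\<Union>i. A i) - B) \<union> (B - (\<Union>i. A i))) < e" using n by linarith
      then show "\<exists>N B. B \<in> sets (F N) \<and> measure M (((\<Union>i. A i) - B) \<union> (B - (\<Union>i. A i))) < e"
        using BN by blast
    qed
  qed
qed

end


lemma card_floor_set:
  fixes x \<delta> :: real and J :: nat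
  assumes d: "0 < \<delta>" and x0: "0 \<le> x" and xJ: "x \<le> J * \<delta>"
  shows "real (card {j\<in>{1..J}. j * \<delta> \<le> x}) * \<delta> \<le> x \<and> x < real (card {j\<in>{1..J}. j * \<delta> \<le> x}) * \<delta> + \<delta>"
proof -
  define k where "k = nat \<lfloor>x / \<delta>\<rfloor>"
  have fl0: "0 \<le> \<lfloor>x / \<delta>\<rfloor>" using x0 d by simp
  have kle: "real k \<le> x / \<delta>" unfolding k_def using fl0 by (simp add: of_nat_nat)
  have klt: "x / \<delta> < real k + 1" unfolding k_def using fl0 by (simp add: of_nat_nat)
  have "x / \<delta> \<le> J" using xJ d by (simp add: field_simps)
  then have kJ: "k \<le> J" using kle klt unfolding k_def by linarith
  have "{j\<in>{1..J}. j * \<delta> \<le> x} = {1..k}"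
  proof (intro equalityI subsetI)
    fix j assume j: "j \<in> {j\<in>{1..J}. j * \<delta> \<le> x}"
    then have "real j \<le> x / \<delta>" using d by (simp add: field_simps)
    then have "int j \<le> \<lfloor>x / \<delta>\<rfloor>" by (simp add: le_floor_iff)
    then show "j \<in> {1..k}" using j unfolding k_def by auto
  next
    fix j assume j: "j \<in> {1..k}"
    then have "real j \<le> x / \<delta>" using kle by auto
    then show "j \<in> {j\<in>{1..J}. j * \<delta> \<le> x}" using j kJ d by (auto simp: field_simps)
  qed
  then have "card {j\<in>{1..J}. j * \<delta> \<le> x} = k" by simp
  moreover have "real k * \<delta> \<le> x" using kle d by (simp add: field_simps)
  moreover have "x < real k * \<delta> + \<delta>" using klt d by (simp add: field_simps)
  ultimately show ?thesis by simp
qed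

lemma sum_indicator_card: fixes J :: nat and P :: "nat \<Rightarrow> 'a \<Rightarrow> bool" shows "(\<Sum>j\<in>{1..J::nat}. indicator {w. P j w} w :: real) = real (card {j\<in>{1..J}. P j w})"
proof -
  have "(\<Sum>j\<in>{1..J::nat}. indicator {w. P j w} w :: real) = (\<Sum>j\<in>{1..J}. of_bool (P j w))"
    by (simp add: indicator_def of_bool_def)
  also have "\<dots> = real (card ({1..J} \<inter> {j. P j w}))" by simp
  also have "{1..J} \<inter> {j. P j w} = {j\<in>{1..J}. P j w}" by auto
  finally show ?thesis .
qed

context filt begin

lemma approx_fun:
  fixes W :: "'w \<Rightarrow> real" and C \<eta> :: real
  assumes gen: "sets M = sigma_sets \<Omega> (\<Union>t. sets (F t))" and ps: "prob_space M"
    and spM: "space M = \<Omega>"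
    and W: "W \<in> borel_measurable M" and Wb: "\<And>w. w \<in> \<Omega> \<Longrightarrow> 0 \<le> W w \<and> W w \<le> C"
    and C: "0 < C" and eta: "0 < \<eta>"
  shows "\<exists>N Z. Z \<in> borel_measurable (F N) \<and> (\<forall>w\<in>\<Omega>. 0 \<le> Z w \<and> Z w \<le> C) \<and> (\<integral>w. \<bar>W w - Z w\<bar> \<partial>M) \<le> \<eta>"
proof -
  interpret prob_space M by (rule ps)
  define J where "J = nat \<lceil>2 * C / \<eta>\<rceil> + 1"
  have J1: "1 \<le> J" unfolding J_def by simp
  define \<delta> where "\<delta> = C / J"
  have d0: "0 < \<delta>" unfolding \<delta>_def using C J1 by simp
  have CJ: "C = J * \<delta>" unfolding \<delta>_def using J1 by simp
  have "2 * C / \<eta> \<le> real J" unfolding J_def by linarith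
  then have dle: "\<delta> \<le> \<eta> / 2" unfolding \<delta>_def using J1 eta C by (simp add: field_simps)
  define e0 where "e0 = \<eta> / (2 * C + 2)"
  have e0: "0 < e0" unfolding e0_def using eta C by simp
  define A where "A j = {w \<in> space M. j * \<delta> \<le> W w}" for j :: nat
  have AM: "A j \<in> sets M" for j unfolding A_def using W by measurable
  have "\<forall>j. \<exists>N B. B \<in> sets (F N) \<and> measure M ((A j - B) \<union> (B - A j)) < e0"
    using approx_set[OF gen finite_measure_axioms AM] e0 by blast
  then obtain NN BB where NB: "\<And>j. BB j \<in> sets (F (NN j))" "\<And>j. measure M ((A j - BB j) \<union> (BB j - A j)) < e0"
    by metis
  define N where "N = Max (NN ` {1..J})"
  have BN: "BB j \<in> sets (F N)" if "j \<in> {1..J}" for j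
  proof -
    have "NN j \<le> N" unfolding N_def using that by (auto intro!: Max_ge)
    then show ?thesis using NB(1)[of j] mono_F by blast
  qed
  have BM: "BB j \<in> sets M" for j using NB(1)[of j] gen by auto
  define Z where "Z w = \<delta> * (\<Sum>j\<in>{1..J}. indicator (BB j) w)" for w
  have Zm: "Z \<in> borel_measurable (F N)" unfolding Z_def using BN
    by (intro borel_measurable_times borel_measurable_const borel_measurable_sum borel_measurable_indicator) auto
  have Zb: "0 \<le> Z w \<and> Z w \<le> C" for w
  proof
    show "0 \<le> Z w" unfolding Z_def using d0 by (auto intro!: sum_nonneg mult_nonneg_nonneg)
    have "(\<Sum>j\<in>{1..J}. indicator (BB j) w) \<le> (\<Sum>j\<in>{1..J}. (1::real))" by (intro sum_mono) (auto simp: indicator_def)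
    then show "Z w \<le> C" unfolding Z_def CJ using d0 by (simp add: mult.commute)
  qed
  define D where "D j = (A j - BB j) \<union> (BB j - A j)" for j
  have DM: "D j \<in> sets M" for j unfolding D_def using AM BM by auto
  have pt: "\<bar>W w - Z w\<bar> \<le> \<delta> + \<delta> * (\<Sum>j\<in>{1..J}. indicator (D j) w)" if w: "w \<in> space M" for w
  proof -
    define Wd where "Wd = \<delta> * (\<Sum>j\<in>{1..J}. indicator (A j) w)"
    have "(\<Sum>j\<in>{1..J}. indicator (A j) w :: real) = (\<Sum>j\<in>{1..J}. indicator {w. j * \<delta> \<le> W w} w)"
      unfolding A_def using w by (intro sum.cong) (auto simp: indicator_def)
    also have "\<dots> = real (card {j\<in>{1..J}. j * \<delta> \<le> W w})" by (rule sum_indicator_card)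
    finally have Wd_eq: "Wd = real (card {j\<in>{1..J}. j * \<delta> \<le> W w}) * \<delta>" unfolding Wd_def by simp
    have "\<bar>W w - Wd\<bar> \<le> \<delta>" using card_floor_set[OF d0, of "W w" J] Wb[of w] w spM CJ
      unfolding Wd_eq by auto
    moreover have "\<bar>Wd - Z w\<bar> \<le> \<delta> * (\<Sum>j\<in>{1..J}. indicator (D j) w)"
    proof -
      have "\<bar>Wd - Z w\<bar> = \<delta> * \<bar>\<Sum>j\<in>{1..J}. indicator (A j) w - indicator (BB j) w\<bar>"
        unfolding Wd_def Z_def using d0 by (simp add: sum_subtractf[symmetric] right_diff_distrib[symmetric] abs_mult)
      also have "\<dots> \<le> \<delta> * (\<Sum>j\<in>{1..J}. \<bar>indicator (A j) w - indicator (BB j) w\<bar>)"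
        using d0 by (intro mult_left_mono sum_abs) auto
      also have "\<dots> = \<delta> * (\<Sum>j\<in>{1..J}. indicator (D j) w)"
        unfolding D_def by (intro arg_cong[where f="\<lambda>x. \<delta> * x"] sum.cong) (auto simp: indicator_def)
      finally show ?thesis .
    qed
    ultimately show ?thesis by linarith
  qed
  have int1: "integrable M (\<lambda>w. \<bar>W w - Z w\<bar>)"
  proof (rule integrable_const_bound[where B="2*C"])
    show "AE x in M. norm \<bar>W x - Z x\<bar> \<le> 2 * C"
    proof (intro AE_I2)
      fix x assume "x \<in> space M"
      then show "norm \<bar>W x - Z x\<bar> \<le> 2 * C" using Wb[of x] Zb[of x] spM by (simp add: abs_le_iff)
    qed
    have "Z \<in> borel_measurable M" using Zm by (rule measurable_from_subalg[rotated]) (auto simp: subalgebra_def space_F spM gen)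
    then show "(\<lambda>x. \<bar>W x - Z x\<bar>) \<in> borel_measurable M" using W by measurable
  qed
  have Dfin: "emeasure M (D j) < \<top>" for j by (simp add: less_top[symmetric])
  have int2: "integrable M (\<lambda>w. \<delta> + \<delta> * (\<Sum>j\<in>{1..J}. indicator (D j) w))"
    using DM Dfin by (intro Bochner_Integration.integrable_add integrable_mult_right Bochner_Integration.integrable_sum integrable_real_indicator) auto
  have "(\<integral>w. \<bar>W w - Z w\<bar> \<partial>M) \<le> (\<integral>w. \<delta> + \<delta> * (\<Sum>j\<in>{1..J}. indicator (D j) w) \<partial>M)"
    using int1 int2 pt by (intro integral_mono) auto
  also have "\<dots> = \<delta> + \<delta> * (\<Sum>j\<in>{1..J}. measure M (D j))"
    using DM Dfin by (simp add: Dfin Bochner_Integration.integral_add int2 integral_sum integrable_real_indicator emeasure_eq_measure prob_space)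
  also have "(\<Sum>j\<in>{1..J}. measure M (D j)) \<le> (\<Sum>j\<in>{1..J}. e0)"
    using NB(2) unfolding D_def by (intro sum_mono) (simp add: less_imp_le)
  also have "(\<Sum>j\<in>{1..J}. e0) = J * e0" by simp
  finally have "(\<integral>w. \<bar>W w - Z w\<bar> \<partial>M) \<le> \<delta> + \<delta> * (J * e0)" using d0 by (simp add: mult_left_mono)
  also have "\<delta> * (J * e0) = C * e0" unfolding CJ by simp
  also have "C * e0 \<le> \<eta> / 2" unfolding e0_def using C eta by (simp add: field_simps)
  finally have "(\<integral>w. \<bar>W w - Z w\<bar> \<partial>M) \<le> \<eta>" using dle by linarith
  then show ?thesis using Zm Zb by blast
qed

end


lemma ennreal_max0: "ennreal (max 0 x) = ennreal x"
  by (cases "0 \<le> x") (auto simp: max_def ennreal_neg)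

context filt begin

lemma e_trunc:
  fixes e :: "nat \<Rightarrow> 'w \<Rightarrow> ennreal" and C \<epsilon> :: real
  assumes gen: "sets M = sigma_sets \<Omega> (\<Union>t. sets (F t))" and ps: "prob_space M" and spM: "space M = \<Omega>"
    and em: "\<And>t. e t \<in> borel_measurable (F t)"
    and hyp: "\<And>\<sigma>. is_stopping_time F \<sigma> \<Longrightarrow> (\<And>w. \<sigma> w \<noteq> \<infinity>) \<Longrightarrow> (\<integral>\<^sup>+ w. stopped_e e \<sigma> w \<partial>M) \<le> 1"
    and st: "is_stopping_time F \<tau>" and C: "0 < C" and eps: "0 < \<epsilon>"
  shows "(\<integral>w. enn2real (min (stopped_e e \<tau> w) (ennreal C)) \<partial>M) \<le> 1 + \<epsilon>"
proof -
  interpret prob_space M by (rule ps)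
  have sM: "sets (F t) \<subseteq> sets M" for t using gen by auto
  have subF: "subalgebra M (F t)" for t using sM by (auto simp: subalgebra_def space_F spM)
  have emM[measurable]: "e t \<in> borel_measurable M" for t using measurable_from_subalg[OF subF em] .
  define W0 where "W0 = stopped_e e \<tau>"
  have W0m[measurable]: "W0 \<in> borel_measurable M" unfolding W0_def by (rule stopped_e_meas[OF st sM spM em])
  define W where "W w = enn2real (min (W0 w) (ennreal C))" for w
  have Wm[measurable]: "W \<in> borel_measurable M" unfolding W_def by measurable
  have Wb: "0 \<le> W w \<and> W w \<le> C" for w unfolding W_def using C by (auto intro!: enn2real_leI)
  have Wfin: "ennreal (W w) = min (W0 w) (ennreal C)" for w
    unfolding W_def by (rule ennreal_enn2real) (auto simp: min_less_iff_disj)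
  have WW0: "ennreal (W w) \<le> W0 w" for w using Wfin[of w] by simp
  define \<delta> where "\<delta> = \<epsilon> / 4"
  have d0: "0 < \<delta>" unfolding \<delta>_def using eps by simp
  define \<eta> where "\<eta> = min (\<epsilon>/4) (\<epsilon> * \<delta> / (2 * (C + 1)))"
  have eta0: "0 < \<eta>" unfolding \<eta>_def using eps d0 C by simp
  obtain N Z where Zm: "Z \<in> borel_measurable (F N)" and Zb: "\<forall>w\<in>\<Omega>. 0 \<le> Z w \<and> Z w \<le> C"
    and Zapp: "(\<integral>w. \<bar>W w - Z w\<bar> \<partial>M) \<le> \<eta>"
    using approx_fun[OF gen ps spM Wm _ C eta0] Wb by blast
  have ZM[measurable]: "Z \<in> borel_measurable M" using measurable_from_subalg[OF subF Zm] .
  have ZF: "Z \<in> borel_measurable (F t)" if "N \<le> t" for t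
    using measurable_from_subalg[OF _ Zm, of "F t"] mono_F[OF that] space_F by (auto simp: subalgebra_def)
  define H where "H t = (if t < N then {w\<in>\<Omega>. \<tau> w = enat t} else {w\<in>\<Omega>. ennreal (Z w - 2*\<delta>) \<le> e t w})" for t
  have Hs: "H t \<in> sets (F t)" for t
  proof (cases "t < N")
    case True then show ?thesis unfolding H_def using stop_eq_set[OF st] by simp
  next
    case False
    have [measurable]: "Z \<in> borel_measurable (F t)" "e t \<in> borel_measurable (F t)" using ZF False em by auto
    have "{w\<in>space (F t). ennreal (Z w - 2*\<delta>) \<le> e t w} \<in> sets (F t)" by measurable
    then show ?thesis unfolding H_def using False space_F by simp
  qed
  define \<sigma> where "\<sigma> = hit H \<tau>"
  have st\<sigma>: "is_stopping_time F \<sigma>" unfolding \<sigma>_def by (rule hit_stopping[OF Hs st])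
  define G where "G = {w\<in>\<Omega>. Z w - 2*\<delta> < W w}"
  have GM[measurable]: "G \<in> sets M" unfolding G_def using spM[symmetric] by simp measurable
  have tfact: "ennreal (Z w - 2*\<delta>) \<le> e m w" if "w \<in> G" "\<tau> w = enat m" for w m
  proof -
    have "ennreal (Z w - 2*\<delta>) \<le> ennreal (W w)" using that(1) unfolding G_def by (auto intro!: ennreal_leI)
    also have "\<dots> \<le> W0 w" by (rule WW0)
    also have "W0 w = e m w" unfolding W0_def stopped_e_def using that(2) by simp
    finally show ?thesis .
  qed
  have Hfact: "ennreal (Z w - 2*\<delta>) \<le> e m w" if "w \<in> G" "w \<in> H m" for w m
    using that tfact unfolding H_def by (auto split: if_splits)
  have exH: "\<exists>t. enat t \<le> \<tau> w \<and> w \<in> H t" if wG: "w \<in> G" for w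
  proof (cases "\<tau> w")
    case (enat t)
    show ?thesis
    proof (cases "t < N")
      case True then show ?thesis using enat wG unfolding H_def G_def by (intro exI[of _ t]) auto
    next
      case False then show ?thesis using enat wG tfact[OF wG enat] unfolding H_def G_def by (intro exI[of _ t]) auto
    qed
  next
    case infinity
    have "\<exists>t\<ge>N. ennreal (Z w - 2*\<delta>) \<le> e t w"
    proof (cases "Z w - 2*\<delta> \<le> 0")
      case True then show ?thesis by (intro exI[of _ N]) (auto simp: ennreal_neg)
    next
      case False
      have "ennreal (Z w - 2*\<delta>) < ennreal (W w)" using wG False unfolding G_def by (auto simp: ennreal_less_iff)
      also have "\<dots> \<le> W0 w" by (rule WW0)
      also have "W0 w = limsup (\<lambda>t. e t w)" unfolding W0_def stopped_e_def using infinity by simp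
      also have "\<dots> = (INF n. SUP m\<in>{n..}. e m w)" by (rule limsup_INF_SUP)
      finally have "ennreal (Z w - 2*\<delta>) < (SUP m\<in>{N..}. e m w)" by (rule less_INF_D) simp
      then obtain t where "t \<in> {N..}" "ennreal (Z w - 2*\<delta>) < e t w" by (auto simp: less_SUP_iff)
      then show ?thesis by (intro exI[of _ t]) auto
    qed
    then obtain t where "N \<le> t" "ennreal (Z w - 2*\<delta>) \<le> e t w" by blast
    then show ?thesis using infinity wG unfolding H_def G_def by (intro exI[of _ t]) auto
  qed
  have key: "\<exists>m. \<sigma> w = enat m \<and> ennreal (Z w - 2*\<delta>) \<le> e m w" if wG: "w \<in> G" for w
  proof -
    obtain t where "enat t \<le> \<tau> w" "w \<in> H t" using exH[OF wG] by blast
    from hit_props[of t \<tau> w H, OF this] obtain m where "\<sigma> w = enat m" "w \<in> H m" unfolding \<sigma>_def by blast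
    then show ?thesis using Hfact[OF wG] by blast
  qed
  define Y where "Y K w = stopped_e e \<sigma> w * indicator {w\<in>\<Omega>. \<sigma> w \<le> enat K} w" for K w
  have SM: "stopped_e e \<sigma> \<in> borel_measurable M" by (rule stopped_e_meas[OF st\<sigma> sM spM em])
  have Ym: "Y K \<in> borel_measurable M" for K
  proof -
    have [measurable]: "{w\<in>\<Omega>. \<sigma> w \<le> enat K} \<in> sets M" using stop_le_set[OF st\<sigma>] sM by blast
    have [measurable]: "stopped_e e \<sigma> \<in> borel_measurable M" by (rule SM)
    show ?thesis unfolding Y_def by measurable
  qed
  have Yinc: "Y K w \<le> Y (Suc K) w" for K w
    unfolding Y_def by (intro mult_left_mono) (auto simp: indicator_def intro: order_trans)
  have Yle: "(\<integral>\<^sup>+ w. Y K w \<partial>M) \<le> 1" for K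
  proof -
    have "(\<integral>\<^sup>+ w. Y K w \<partial>M) \<le> (\<integral>\<^sup>+ w. stopped_e e (\<lambda>w. min (\<sigma> w) (enat K)) w \<partial>M)"
      by (intro nn_integral_mono) (auto simp: Y_def stopped_e_def indicator_def min_def split: enat.splits)
    also have "\<dots> \<le> 1" by (rule hyp[OF min_stopping[OF st\<sigma>]]) (auto simp: min_def enat_ile)
    finally show ?thesis .
  qed
  have "(\<integral>\<^sup>+ w. ennreal (indicator G w * (Z w - 2*\<delta>)) \<partial>M) \<le> (\<integral>\<^sup>+ w. (SUP K. Y K w) \<partial>M)"
  proof (intro nn_integral_mono)
    fix w assume "w \<in> space M"
    show "ennreal (indicator G w * (Z w - 2*\<delta>)) \<le> (SUP K. Y K w)"
    proof (cases "w \<in> G")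
      case True
      then obtain m where m: "\<sigma> w = enat m" "ennreal (Z w - 2*\<delta>) \<le> e m w" using key by blast
      have "Y m w = e m w" unfolding Y_def stopped_e_def using m True unfolding G_def by simp
      then show ?thesis using m True by (intro SUP_upper2[of m]) auto
    qed simp
  qed
  also have "\<dots> = (SUP K. \<integral>\<^sup>+ w. Y K w \<partial>M)"
    by (rule nn_integral_monotone_convergence_SUP) (auto simp: incseq_SucI le_funI Yinc Ym)
  also have "\<dots> \<le> 1" by (intro SUP_least Yle)
  finally have nnb: "(\<integral>\<^sup>+ w. ennreal (indicator G w * (Z w - 2*\<delta>)) \<partial>M) \<le> 1" .
  have intb: "\<And>(f :: 'w \<Rightarrow> real) (B::real). f \<in> borel_measurable M \<Longrightarrow> (\<And>w. w \<in> space M \<Longrightarrow> \<bar>f w\<bar> \<le> B) \<Longrightarrow> integrable M f"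
  proof -
    fix f :: "'w \<Rightarrow> real" and B :: real
    assume "f \<in> borel_measurable M" "\<And>w. w \<in> space M \<Longrightarrow> \<bar>f w\<bar> \<le> B"
    then show "integrable M f" by (intro integrable_const_bound[where B=B]) auto
  qed
  have Zb': "\<And>w. w \<in> space M \<Longrightarrow> 0 \<le> Z w \<and> Z w \<le> C" using Zb spM by auto
  define g where "g w = max 0 (indicator G w * (Z w - 2*\<delta>))" for w
  have gm: "g \<in> borel_measurable M" unfolding g_def by measurable
  have gint: "integrable M g"
  proof (rule intb[OF gm, of "C + 2*\<delta>"])
    fix w assume w: "w \<in> space M"
    show "\<bar>g w\<bar> \<le> C + 2*\<delta>" using Zb'[OF w] d0 C by (auto simp: g_def indicator_def)
  qed
  have "ennreal (\<integral>w. g w \<partial>M) = (\<integral>\<^sup>+ w. ennreal (g w) \<partial>M)"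
    by (rule nn_integral_eq_integral[symmetric, OF gint]) (auto simp: g_def)
  also have "\<dots> = (\<integral>\<^sup>+ w. ennreal (indicator G w * (Z w - 2*\<delta>)) \<partial>M)" unfolding g_def ennreal_max0 ..
  finally have geq: "ennreal (\<integral>w. g w \<partial>M) = (\<integral>\<^sup>+ w. ennreal (indicator G w * (Z w - 2*\<delta>)) \<partial>M)" .
  have gle: "(\<integral>w. g w \<partial>M) \<le> 1" using geq nnb ennreal_le_1 by metis
  have fint: "integrable M (\<lambda>w. indicator G w * (Z w - 2*\<delta>))"
  proof (rule intb[of _ "C + 2*\<delta>"])
    fix w assume w: "w \<in> space M"
    show "\<bar>indicator G w * (Z w - 2*\<delta>)\<bar> \<le> C + 2*\<delta>" using Zb'[OF w] d0 C by (auto simp: indicator_def)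
  qed measurable
  have Ile: "(\<integral>w. indicator G w * (Z w - 2*\<delta>) \<partial>M) \<le> 1"
    using integral_mono[OF fint gint, of] gle unfolding g_def by (smt (verit) max.cobounded2)
  have Wint: "integrable M W" by (rule intb[OF Wm, of C]) (use Wb in auto)
  have Zint: "integrable M Z"
  proof (rule intb[OF ZM, of C])
    fix w assume w: "w \<in> space M"
    show "\<bar>Z w\<bar> \<le> C" using Zb'[OF w] by auto
  qed
  have dint: "integrable M (\<lambda>w. \<bar>W w - Z w\<bar>)"
  proof (rule intb[of _ "2*C"])
    fix w assume w: "w \<in> space M"
    show "\<bar>\<bar>W w - Z w\<bar>\<bar> \<le> 2*C" using Zb'[OF w] Wb[of w] by (auto simp: abs_le_iff)
  qed measurable
  have GcM: "\<Omega> - G \<in> sets M" using GM spM by (metis sets.compl_sets)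
  have iint: "integrable M (indicator (\<Omega> - G) :: 'w \<Rightarrow> real)" 
  proof -
    have fin: "emeasure M (\<Omega> - G) < \<top>" by (simp add: less_top[symmetric])
    show ?thesis using GcM fin by (intro integrable_real_indicator) auto
  qed
  have pO: "prob \<Omega> = 1" using prob_space spM by simp
  have a: "(\<integral>w. W w \<partial>M) \<le> (\<integral>w. Z w \<partial>M) + \<eta>"
  proof -
    have "(\<integral>w. W w \<partial>M) - (\<integral>w. Z w \<partial>M) = (\<integral>w. W w - Z w \<partial>M)" using Wint Zint by simp
    also have "\<dots> \<le> (\<integral>w. \<bar>W w - Z w\<bar> \<partial>M)" using Wint Zint dint by (intro integral_mono) auto
    finally show ?thesis using Zapp by linarith
  qed
  have b: "(\<integral>w. Z w \<partial>M) \<le> (\<integral>w. indicator G w * (Z w - 2*\<delta>) \<partial>M) + 2*\<delta> + C * measure M (\<Omega> - G)"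
  proof -
    have "(\<integral>w. Z w \<partial>M) \<le> (\<integral>w. indicator G w * (Z w - 2*\<delta>) + 2*\<delta> + C * indicator (\<Omega> - G) w \<partial>M)"
      using Zint fint iint
    proof (intro integral_mono)
      fix w assume w: "w \<in> space M"
      then show "Z w \<le> indicator G w * (Z w - 2*\<delta>) + 2*\<delta> + C * indicator (\<Omega> - G) w"
        using Zb'[OF w] d0 spM by (auto simp: indicator_def)
    qed auto
    also have "\<dots> = (\<integral>w. indicator G w * (Z w - 2*\<delta>) \<partial>M) + 2*\<delta> + C * measure M (\<Omega> - G)"
      using fint iint GcM spM by (simp add: Bochner_Integration.integral_add pO Int_absorb2 Diff_subset)
    finally show ?thesis .
  qed
  have c: "2*\<delta> * measure M (\<Omega> - G) \<le> \<eta>"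
  proof -
    have "2*\<delta> * measure M (\<Omega> - G) = (\<integral>w. 2*\<delta> * indicator (\<Omega> - G) w \<partial>M)"
      using GcM spM by (simp add: Int_absorb2 Diff_subset)
    also have "\<dots> \<le> (\<integral>w. \<bar>W w - Z w\<bar> \<partial>M)"
      using iint dint
    proof (intro integral_mono)
      fix w assume "w \<in> space M"
      then show "2*\<delta> * indicator (\<Omega> - G) w \<le> \<bar>W w - Z w\<bar>"
        using spM unfolding G_def by (auto simp: indicator_def)
    qed auto
    finally show ?thesis using Zapp by linarith
  qed
  have m0: "0 \<le> measure M (\<Omega> - G)" by simp
  have "C * measure M (\<Omega> - G) \<le> C * (\<eta> / (2*\<delta>))"
    using c d0 C by (intro mult_left_mono) (auto simp: field_simps)
  also have "C * (\<eta> / (2*\<delta>)) \<le> \<epsilon>/4"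
  proof -
    have "\<eta> \<le> \<epsilon> * \<delta> / (2 * (C + 1))" unfolding \<eta>_def by simp
    then have "C * (\<eta> / (2*\<delta>)) \<le> C * (\<epsilon> * \<delta> / (2 * (C + 1)) / (2*\<delta>))"
      using C d0 by (intro mult_left_mono divide_right_mono) auto
    also have "\<dots> = \<epsilon> / 4 * (C / (C + 1))"
    proof -
      have n1: "C + 1 \<noteq> 0" "\<delta> \<noteq> 0" using d0 C by auto
      show ?thesis using d0 C by (simp add: divide_simps)
    qed
    also have "\<dots> \<le> \<epsilon> / 4" using C eps by (intro mult_left_le) auto
    finally show ?thesis .
  qed
  finally have "C * measure M (\<Omega> - G) \<le> \<epsilon>/4" .
  moreover have "\<eta> \<le> \<epsilon>/4" unfolding \<eta>_def by (rule min.cobounded1)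
  ultimately have "(\<integral>w. W w \<partial>M) \<le> 1 + \<epsilon>" using a b Ile unfolding \<delta>_def by linarith
  then show ?thesis unfolding W_def W0_def .
qed

end


lemma SUP_min_of_nat: "(SUP C. min x (of_nat C)) = (x::ennreal)"
proof -
  have i: "inf x (SUP C. of_nat C) = (SUP C. inf x (of_nat C))" by (rule inf_SUP)
  have "(SUP C. min x (of_nat C)) = inf x (SUP C. of_nat C)" unfolding i by (simp add: inf_min)
  also have "\<dots> = x" by (simp add: ennreal_SUP_of_nat_eq_top)
  finally show ?thesis .
qed

context filt begin

lemma e_full:
  fixes e :: "nat \<Rightarrow> 'w \<Rightarrow> ennreal"
  assumes gen: "sets M = sigma_sets \<Omega> (\<Union>t. sets (F t))" and ps: "prob_space M" and spM: "space M = \<Omega>"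
    and em: "\<And>t. e t \<in> borel_measurable (F t)"
    and hyp: "\<And>\<sigma>. is_stopping_time F \<sigma> \<Longrightarrow> (\<And>w. \<sigma> w \<noteq> \<infinity>) \<Longrightarrow> (\<integral>\<^sup>+ w. stopped_e e \<sigma> w \<partial>M) \<le> 1"
    and st: "is_stopping_time F \<tau>"
  shows "(\<integral>\<^sup>+ w. stopped_e e \<tau> w \<partial>M) \<le> 1"
proof -
  interpret prob_space M by (rule ps)
  have sM: "sets (F t) \<subseteq> sets M" for t using gen by auto
  define W0 where "W0 = stopped_e e \<tau>"
  have W0m[measurable]: "W0 \<in> borel_measurable M" unfolding W0_def by (rule stopped_e_meas[OF st sM spM em])
  have bnd: "(\<integral>\<^sup>+ w. min (W0 w) (of_nat C) \<partial>M) \<le> 1" for C :: nat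
  proof (cases "C = 0")
    case True then show ?thesis by simp
  next
    case False
    define r where "r = real C"
    have r0: "0 < r" unfolding r_def using False by simp
    define Wr where "Wr w = enn2real (min (W0 w) (ennreal r))" for w
    have Wrm: "Wr \<in> borel_measurable M" unfolding Wr_def by measurable
    have Wrb: "0 \<le> Wr w \<and> Wr w \<le> r" for w unfolding Wr_def using r0 by (auto intro!: enn2real_leI)
    have eq: "min (W0 w) (of_nat C) = ennreal (Wr w)" for w
      unfolding Wr_def r_def by (subst ennreal_enn2real) (auto simp: min_less_iff_disj ennreal_of_nat_eq_real_of_nat)
    have Wri: "integrable M Wr"
      by (rule integrable_const_bound[where B=r]) (use Wrb Wrm in auto)
    have "(\<integral>w. Wr w \<partial>M) \<le> 1"
    proof (rule field_le_epsilon)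
      fix \<epsilon> :: real assume "0 < \<epsilon>"
      show "(\<integral>w. Wr w \<partial>M) \<le> 1 + \<epsilon>"
        unfolding Wr_def W0_def by (rule e_trunc[OF gen ps spM em hyp st r0 \<open>0 < \<epsilon>\<close>])
    qed
    moreover have "(\<integral>\<^sup>+ w. min (W0 w) (of_nat C) \<partial>M) = ennreal (\<integral>w. Wr w \<partial>M)"
      unfolding eq by (rule nn_integral_eq_integral[OF Wri]) (use Wrb in auto)
    ultimately show ?thesis by simp
  qed
  have "(\<integral>\<^sup>+ w. W0 w \<partial>M) = (\<integral>\<^sup>+ w. (SUP C. min (W0 w) (of_nat C)) \<partial>M)"
    by (simp add: SUP_min_of_nat)
  also have "\<dots> = (SUP C. \<integral>\<^sup>+ w. min (W0 w) (of_nat C) \<partial>M)"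
  proof (rule nn_integral_monotone_convergence_SUP)
    have inc: "\<And>m n w. m \<le> n \<Longrightarrow> min (W0 w) (of_nat m :: ennreal) \<le> min (W0 w) (of_nat n)"
      by (intro min.mono) auto
    then show "incseq (\<lambda>C w. min (W0 w) (of_nat C))" unfolding incseq_def le_fun_def by blast
  qed measurable
  also have "\<dots> \<le> 1" by (intro SUP_least bnd)
  finally show ?thesis unfolding W0_def .
qed

end


lemma rfr1: "0 \<le> (a::real) \<Longrightarrow> 1 / (1 + a) \<le> 1 \<and> 0 < 1 + a" by (simp add: divide_le_eq)
lemma rfr2: "0 \<le> (a::real) \<Longrightarrow> a \<le> b \<Longrightarrow> 1 / (1 + b) \<le> 1 / (1 + a)" by (simp add: divide_simps)
lemma rfr3: "0 \<le> (a::real) \<Longrightarrow> a < b \<Longrightarrow> 1 / (1 + b) < 1 / (1 + a)" by (simp add: divide_simps)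

definition gfun :: "ennreal \<Rightarrow> real" where
  "gfun x = (if x = \<top> then 0 else 1 / (1 + enn2real x))"

lemma gfun_meas[measurable]: assumes f[measurable]: "f \<in> borel_measurable M" shows "(\<lambda>w. gfun (f w)) \<in> borel_measurable M"
proof -
  have "{\<top>::ennreal} \<in> sets borel" by (intro borel_closed) simp
  then have [measurable]: "{w \<in> space M. f w = \<top>} \<in> sets M" using pred_eq_const1[OF f, of \<top>] by (simp add: pred_def)
  show ?thesis unfolding gfun_def by measurable
qed

lemma gfun_bnd: "0 \<le> gfun x \<and> gfun x \<le> 1"
  using rfr1[OF enn2real_nonneg[of x]] unfolding gfun_def by auto

lemma gfun_mono: assumes "x \<le> y" shows "gfun y \<le> gfun x"
proof (cases "y = \<top>")
  case True then show ?thesis using gfun_bnd[of x] by (simp add: gfun_def)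
next
  case False
  then have "x \<noteq> \<top>" using assms by (auto simp: top_unique)
  moreover have "enn2real x \<le> enn2real y" using assms False by (intro enn2real_mono) (auto simp: less_top)
  ultimately show ?thesis using False rfr2[OF enn2real_nonneg[of x]] by (simp add: gfun_def)
qed

lemma gfun_strict: assumes "x < y" shows "gfun y < gfun x"
proof (cases "y = \<top>")
  case True
  then have "x \<noteq> \<top>" using assms by auto
  then show ?thesis using True rfr1[OF enn2real_nonneg[of x]] by (simp add: gfun_def)
next
  case False
  then have xt: "x \<noteq> \<top>" using assms by (auto simp: top_unique)
  have "enn2real x < enn2real y" using assms False xt
    by (simp add: enn2real_less_iff less_top)
  then show ?thesis using False xt rfr3[OF enn2real_nonneg[of x]] by (simp add: gfun_def)
qed

context setting begin

definition leE :: "(nat \<Rightarrow> 'w \<Rightarrow> ennreal) \<Rightarrow> (nat \<Rightarrow> 'w \<Rightarrow> ennreal) \<Rightarrow> bool" where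
  "leE q q' \<longleftrightarrow> (\<forall>t. \<forall>w\<in>\<Omega>. q' t w \<le> q t w)"

lemma valid_lim_e:
  assumes gen: "sets Finf = sigma_sets \<Omega> (\<Union>t. sets (F t))"
    and V: "\<And>n. safe_e F \<Q> (s n)" and dec: "\<And>n. leE (s (Suc n)) (s n)"
  shows "safe_e F \<Q> (\<lambda>t w. SUP n. s n t w) \<and> (\<forall>n. leE (\<lambda>t w. SUP n. s n t w) (s n))"
proof -
  define l where "l = (\<lambda>t w. SUP n. s n t w)"
  have meas[measurable]: "\<And>n t. s n t \<in> borel_measurable (F t)"
    using V unfolding safe_e_def by auto
  have lmeas: "l t \<in> borel_measurable (F t)" for t unfolding l_def by measurable
  have valid: "(\<integral>\<^sup>+ w. stopped_e l \<tau> w \<partial>Q) \<le> 1" if st: "is_stopping_time F \<tau>" and Q: "Q \<in> \<Q>" for \<tau> Q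
  proof (rule e_full[OF _ Q_prob[OF Q] Q_space[OF Q] lmeas _ st])
    show "sets Q = sigma_sets \<Omega> (\<Union>t. sets (F t))" using Q_sets[OF Q] gen by simp
    fix \<sigma> assume st\<sigma>: "is_stopping_time F \<sigma>" and fin: "\<And>w. \<sigma> w \<noteq> \<infinity>"
    have eq: "stopped_e l \<sigma> w = (SUP n. stopped_e (s n) \<sigma> w)" for w
      using fin[of w] unfolding stopped_e_def l_def by (cases "\<sigma> w") auto
    have "(\<integral>\<^sup>+ w. stopped_e l \<sigma> w \<partial>Q) = (\<integral>\<^sup>+ w. (SUP n. stopped_e (s n) \<sigma> w) \<partial>Q)" unfolding eq ..
    also have "\<dots> = (SUP n. \<integral>\<^sup>+ w. stopped_e (s n) \<sigma> w \<partial>Q)"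
    proof (rule nn_integral_monotone_convergence_SUP_AE)
      show "AE w in Q. stopped_e (s n) \<sigma> w \<le> stopped_e (s (Suc n)) \<sigma> w" for n
      proof (intro AE_I2)
        fix w assume w: "w \<in> space Q"
        obtain i where "\<sigma> w = enat i" using fin[of w] by (cases "\<sigma> w") auto
        then show "stopped_e (s n) \<sigma> w \<le> stopped_e (s (Suc n)) \<sigma> w"
          using dec[of n] w Q_space[OF Q] unfolding leE_def stopped_e_def by auto
      qed
      show "stopped_e (s n) \<sigma> \<in> borel_measurable Q" for n
        by (rule stopped_e_meas[OF st\<sigma> Q_sub[OF Q] Q_space[OF Q] meas])
    qed
    also have "\<dots> \<le> 1" using V st\<sigma> Q unfolding safe_e_def by (auto intro!: SUP_least)
    finally show "(\<integral>\<^sup>+ w. stopped_e l \<sigma> w \<partial>Q) \<le> 1" .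
  qed
  have "safe_e F \<Q> l" unfolding safe_e_def using lmeas valid by auto
  moreover have "\<forall>n. leE l (s n)" unfolding leE_def l_def by (auto intro: SUP_upper)
  ultimately show ?thesis unfolding l_def by simp
qed

lemma e_max_valid:
  assumes v2: "safe_e F \<Q> p2" and v1: "safe_e F \<Q> p1" and d: "dominates_e \<Q> p2 p1"
  shows "safe_e F \<Q> (\<lambda>t w. max (p2 t w) (p1 t w))"
proof -
  let ?p3 = "\<lambda>t w. max (p2 t w) (p1 t w)"
  have m[measurable]: "\<And>t. p2 t \<in> borel_measurable (F t)" "\<And>t. p1 t \<in> borel_measurable (F t)"
    using v1 v2 unfolding safe_e_def by auto
  have m3: "\<And>t. ?p3 t \<in> borel_measurable (F t)" by measurable
  moreover have "(\<integral>\<^sup>+ w. stopped_e ?p3 \<tau> w \<partial>Q) \<le> 1"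
    if st: "is_stopping_time F \<tau>" and Q: "Q \<in> \<Q>" for \<tau> Q
  proof -
    have "AE w in Q. \<forall>t. p1 t w \<le> p2 t w" using d Q unfolding dominates_e_def by (simp add: AE_all_countable)
    then have ae: "AE w in Q. stopped_e ?p3 \<tau> w = stopped_e p2 \<tau> w"
    proof (rule AE_mp, intro AE_I2 impI)
      fix w assume "\<forall>t. p1 t w \<le> p2 t w"
      then have pt: "\<And>t. max (p2 t w) (p1 t w) = p2 t w" by (simp add: max_absorb1)
      show "stopped_e ?p3 \<tau> w = stopped_e p2 \<tau> w" unfolding stopped_e_def by (simp only: pt)
    qed
    then have "(\<integral>\<^sup>+ w. stopped_e ?p3 \<tau> w \<partial>Q) = (\<integral>\<^sup>+ w. stopped_e p2 \<tau> w \<partial>Q)"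
      by (rule nn_integral_cong_AE)
    also have "\<dots> \<le> 1" using v2 st Q unfolding safe_e_def by auto
    finally show ?thesis .
  qed
  ultimately show ?thesis unfolding safe_e_def by blast
qed

theorem e_part:
  assumes gen: "sets Finf = sigma_sets \<Omega> (\<Union>t. sets (F t))"
    and p: "safe_e F \<Q> p"
  shows "\<exists>p'. admissible_e F \<Q> p' \<and> dominates_e \<Q> p' p"
proof -
  interpret R: prob_space R by (rule R_prob)
  define \<Phi> where "\<Phi> t q = (\<integral>w. gfun (q t w) \<partial>R)" for t and q :: "nat \<Rightarrow> 'w \<Rightarrow> ennreal"
  have int: "integrable R (\<lambda>w. gfun (q t w))" if "safe_e F \<Q> q" for q t
  proof (rule R_int[where B=1])
    have [measurable]: "q t \<in> borel_measurable (F t)" using that unfolding safe_e_def by auto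
    show "(\<lambda>w. gfun (q t w)) \<in> borel_measurable (F t)" by measurable
    show "\<bar>gfun (q t w)\<bar> \<le> 1" for w using gfun_bnd[of "q t w"] by auto
  qed
  have "\<exists>x\<in>{q. safe_e F \<Q> q}. leE x p \<and> (\<forall>y\<in>{q. safe_e F \<Q> q}. leE y x \<longrightarrow> (\<forall>t. \<Phi> t x \<le> \<Phi> t y))"
  proof (rule greedy)
    show "leE x z" if "leE x y" "leE y z" for x y z using that unfolding leE_def by (meson order_trans)
    show "leE x x" for x unfolding leE_def by auto
    show "\<Phi> t x \<le> \<Phi> t y" if "x \<in> {q. safe_e F \<Q> q}" "y \<in> {q. safe_e F \<Q> q}" "leE x y" for x y t
      unfolding \<Phi>_def using that int R_space unfolding leE_def by (intro integral_mono gfun_mono) auto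
    show "0 \<le> \<Phi> t x" for x t
      unfolding \<Phi>_def using gfun_bnd by (intro Bochner_Integration.integral_nonneg) auto
    show "\<exists>l\<in>{q. safe_e F \<Q> q}. \<forall>n. leE l (s n)"
      if "\<And>n. s n \<in> {q. safe_e F \<Q> q}" "\<And>n. leE (s (Suc n)) (s n)" for s
      using valid_lim_e[OF gen, of s] that by blast
  qed (use p in auto)
  then obtain x where xv: "safe_e F \<Q> x" and xp: "leE x p"
    and xmin: "\<And>y t. safe_e F \<Q> y \<Longrightarrow> leE y x \<Longrightarrow> \<Phi> t x \<le> \<Phi> t y" by blast
  have "admissible_e F \<Q> x"
    unfolding admissible_e_def
  proof (intro conjI xv notI)
    assume "\<exists>e'. safe_e F \<Q> e' \<and> dominates_e \<Q> e' x \<and> (\<exists>t. \<exists>Q\<in>\<Q>. 0 < measure Q {w \<in> space Q. x t w < e' t w})"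
    then obtain p2 t Q where v2: "safe_e F \<Q> p2" and d: "dominates_e \<Q> p2 x" and Q: "Q \<in> \<Q>"
      and pos: "0 < measure Q {w \<in> space Q. x t w < p2 t w}" by blast
    define p3 where "p3 = (\<lambda>t w. max (p2 t w) (x t w))"
    have v3: "safe_e F \<Q> p3" unfolding p3_def by (rule e_max_valid[OF v2 xv d])
    have "leE p3 x" unfolding leE_def p3_def by auto
    then have ge: "\<Phi> t x \<le> \<Phi> t p3" using xmin[OF v3] by blast
    have [measurable]: "p2 t \<in> borel_measurable (F t)" "x t \<in> borel_measurable (F t)"
      using v2 xv unfolding safe_e_def by auto
    define A where "A = {w \<in> space (F t). x t w < p2 t w}"
    have AF: "A \<in> sets (F t)" unfolding A_def by measurable
    have "A = {w \<in> space Q. x t w < p2 t w}" unfolding A_def using Q_space[OF Q] space_F by simp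
    then have "emeasure R A \<noteq> 0" using R_pos[OF Q AF] pos by simp
    moreover have "AE w in R. w \<in> A \<longrightarrow> gfun (p3 t w) \<noteq> gfun (x t w)"
      by (intro AE_I2 impI) (auto simp: A_def p3_def dest!: gfun_strict)
    moreover have "AE w in R. gfun (p3 t w) \<le> gfun (x t w)"
      by (intro AE_I2) (auto simp: p3_def intro!: gfun_mono)
    ultimately have "\<Phi> t p3 < \<Phi> t x" unfolding \<Phi>_def
      using int[OF v3] int[OF xv] R_sub[of t] AF
      by (intro R.integral_less_AE[where A=A]) auto
    with ge show False by simp
  qed
  moreover have "dominates_e \<Q> x p" unfolding dominates_e_def
    using xp Q_space unfolding leE_def by (auto intro!: AE_I2)
  ultimately show ?thesis by blast
qed

end


lemma Fil_gen_sub: "{U -` B \<inter> \<Omega> | B. B \<in> sets borel} \<union> (\<Union>s\<in>{1..t}. {X s -` A \<inter> \<Omega> | A. A \<in> sets S}) \<subseteq> Pow \<Omega>"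
  by blast

lemma Fil_space: "space (Fil \<Omega> S U X t) = \<Omega>"
  unfolding Fil_def by (rule space_measure_of_conv)

lemma Fil_sets: "sets (Fil \<Omega> S U X t) = sigma_sets \<Omega> ({U -` B \<inter> \<Omega> | B. B \<in> sets borel} \<union> (\<Union>s\<in>{1..t}. {X s -` A \<inter> \<Omega> | A. A \<in> sets S}))"
  unfolding Fil_def by (rule sets_measure_of[OF Fil_gen_sub])

lemma Fil_mono: "s \<le> t \<Longrightarrow> sets (Fil \<Omega> S U X s) \<subseteq> sets (Fil \<Omega> S U X t)"
  unfolding Fil_sets by (rule sigma_sets_mono', rule Un_mono, rule order_refl, rule UN_mono) auto

lemma Finf_sub_Pow: "(\<Union>t. sets (Fil \<Omega> S U X t)) \<subseteq> Pow \<Omega>"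
proof
  fix A assume "A \<in> (\<Union>t. sets (Fil \<Omega> S U X t))"
  then obtain t where "A \<in> sets (Fil \<Omega> S U X t)" by blast
  then have "A \<subseteq> space (Fil \<Omega> S U X t)" by (rule sets.sets_into_space)
  then show "A \<in> Pow \<Omega>" unfolding Fil_space by blast
qed

lemma Finf_space: "space (Finf \<Omega> S U X) = \<Omega>"
  unfolding Finf_def by (rule space_measure_of_conv)

lemma Finf_sets: "sets (Finf \<Omega> S U X) = sigma_sets \<Omega> (\<Union>t. sets (Fil \<Omega> S U X t))"
  unfolding Finf_def by (rule sets_measure_of[OF Finf_sub_Pow])

theorem proposition2:
  fixes \<Omega> :: "'w set" and S :: "'x measure" and U :: "'w \<Rightarrow> real"
    and X :: "nat \<Rightarrow> 'w \<Rightarrow> 'x" and \<Q> :: "'w measure set" and \<alpha> :: real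
  assumes X_space: "\<And>s. s \<ge> 1 \<Longrightarrow> X s \<in> \<Omega> \<rightarrow> space S"
    and Q_prob: "\<And>Q. Q \<in> \<Q> \<Longrightarrow> prob_space Q \<and> sets Q = sets (Finf \<Omega> S U X)"
    and U_uniform: "\<And>Q. Q \<in> \<Q> \<Longrightarrow> distr Q lborel U = uniform_measure lborel {0..1}"
    and U_indep: "\<And>Q. Q \<in> \<Q> \<Longrightarrow>
        prob_space.indep_set Q
          (sigma_sets \<Omega> {U -` B \<inter> \<Omega> | B. B \<in> sets borel})
          (sigma_sets \<Omega> (\<Union>s\<in>{1..}. {X s -` A \<inter> \<Omega> | A. A \<in> sets S}))"
    and loc_dom: "locally_dominated (Fil \<Omega> S U X) (Finf \<Omega> S U X) \<Q>"
  shows "(\<forall>p. valid_p (Fil \<Omega> S U X) \<Q> p \<longrightarrow>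
            (\<exists>p'. admissible_p (Fil \<Omega> S U X) \<Q> p' \<and> dominates_p \<Q> p' p)) \<and>
         (\<forall>e. safe_e (Fil \<Omega> S U X) \<Q> e \<longrightarrow>
            (\<exists>e'. admissible_e (Fil \<Omega> S U X) \<Q> e' \<and> dominates_e \<Q> e' e)) \<and>
         (\<forall>\<psi>. seq_test (Fil \<Omega> S U X) \<Q> \<alpha> \<psi> \<longrightarrow>
            (\<exists>\<psi>'. admissible_test (Fil \<Omega> S U X) \<Q> \<alpha> \<psi>' \<and> dominates_test \<Q> \<psi>' \<psi>))"
proof -
  obtain R where R: "prob_space R" "sets R = sets (Finf \<Omega> S U X)"
    and ld0: "\<forall>t. \<forall>Q\<in>\<Q>. \<forall>A\<in>sets (Fil \<Omega> S U X t). emeasure R A = 0 \<longrightarrow> emeasure Q A = 0"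
    using loc_dom unfolding locally_dominated_def by (elim exE conjE) (rule that)
  have ld: "\<And>t Q A. Q \<in> \<Q> \<Longrightarrow> A \<in> sets (Fil \<Omega> S U X t) \<Longrightarrow> emeasure R A = 0 \<Longrightarrow> emeasure Q A = 0"
    using ld0 by simp
  have filt: "filt \<Omega> (Fil \<Omega> S U X)" by (rule filt.intro) (rule Fil_space, erule Fil_mono)
  interpret setting \<Omega> "Fil \<Omega> S U X" \<Q> R "Finf \<Omega> S U X"
    apply (intro_locales)
     apply (rule filt)
    apply (rule setting_axioms.intro)
    subgoal using Q_prob by blast
    subgoal using Q_prob by blast
    subgoal unfolding Finf_sets by (intro subsetI sigma_sets.Basic UN_I[OF UNIV_I])
    subgoal by (rule Finf_space)
    subgoal by (rule R(1))
    subgoal by (rule R(2))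
    subgoal by (rule ld)
    done
  show ?thesis
  proof (intro conjI allI impI)
    fix p assume "valid_p (Fil \<Omega> S U X) \<Q> p"
    then show "\<exists>p'. admissible_p (Fil \<Omega> S U X) \<Q> p' \<and> dominates_p \<Q> p' p" by (rule p_part)
  next
    fix p assume "safe_e (Fil \<Omega> S U X) \<Q> p"
    then show "\<exists>p'. admissible_e (Fil \<Omega> S U X) \<Q> p' \<and> dominates_e \<Q> p' p" by (rule e_part[OF Finf_sets])
  next
    fix p assume "seq_test (Fil \<Omega> S U X) \<Q> \<alpha> p"
    then show "\<exists>p'. admissible_test (Fil \<Omega> S U X) \<Q> \<alpha> p' \<and> dominates_test \<Q> p' p" by (rule test_part)
  qed
qed


end
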